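(* Let $|q|<1$ and let $(\alpha_n,\beta_n)$ be a Bailey pair with respect to $a$. Assume $|qa|<|z|$, no denominator vanishes, and all series converge absolutely. Then $$\sum_{n=1}^{\infty} (z;q)_{n}(q;q)_{n-1}\left( \frac{q a}{ z }\right )^{n} \beta_n - \sum_{n=1}^{\infty}\frac{(z;q)_{n}(q;q)_{n-1}}{(q a ,q a/z;q)_n}\left (\frac{q a}{z}\right)^{n}\alpha_n=f_1(a,z,q),$$ where $f_1(a,z,q)$ is given by each of the following (equal) expressions: $$f_1(a,z,q)=-\sum_{n=1}^{\infty} \frac{(q\sqrt{a},-q\sqrt{a},a,z;q)_{n}\,q^{n(n+1)/2}}{(\sqrt{a},-\sqrt{a},q a,qa/z;q)_{n}(1-q^n)}\left( \frac{- a}{ z }\right )^{n} =\sum_{n=1}^{\infty} \frac{(z;q)_{n}}{(q a;q)_{n}(1-q^n)}\left( \frac{q a}{ z }\right )^{n} =\sum_{n=1}^{\infty}\frac{a q^n/z}{1-a q^n/z}-\sum_{n=1}^{\infty}\frac{a q^n}{1-aq^n}.$$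
   Context: Notation: $(x;q)_n=(1-x)(1-xq)\cdots(1-xq^{n-1})$, $(x;q)_0=1$, $(x_1,\dots,x_m;q)_n=(x_1;q)_n\cdots(x_m;q)_n$. A Bailey pair with respect to $a$ (base $q$) is a pair of sequences $(\alpha_n,\beta_n)_{n\ge0}$ with $\alpha_0=\beta_0=1$ and, for $n>0$, $\beta_n=\sum_{j=0}^{n}\frac{\alpha_j}{(q;q)_{n-j}(aq;q)_{n+j}}$. *)

theory Defs
  imports "HOL-Analysis.Analysis"
begin

definition qpoch :: "complex \<Rightarrow> complex \<Rightarrow> nat \<Rightarrow> complex" where
  "qpoch x q n = (\<Prod>k<n. 1 - x * q ^ k)"

definition bailey_pair ::
  "complex \<Rightarrow> complex \<Rightarrow> (nat \<Rightarrow> complex) \<Rightarrow> (nat \<Rightarrow> complex) \<Rightarrow> bool" where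
  "bailey_pair a q \<alpha> \<beta> \<longleftrightarrow> \<alpha> 0 = 1 \<and> \<beta> 0 = 1 \<and>
     (\<forall>n>0. \<beta> n = (\<Sum>j\<le>n. \<alpha> j / (qpoch q q (n - j) * qpoch (a * q) q (n + j))))"

end

theory Submission
  imports Defs "HOL-Complex_Analysis.Complex_Analysis"
begin


lemma qpoch_0[simp]: "qpoch x q 0 = 1" by (simp add: qpoch_def)
lemma qpoch_Suc: "qpoch x q (Suc n) = qpoch x q n * (1 - x * q ^ n)"
  by (simp add: qpoch_def)

lemma qpoch_add: "qpoch x q (m + n) = qpoch x q m * qpoch (x * q ^ m) q n"
  by (induction n) (simp_all add: qpoch_Suc power_add mult_ac)

lemma real_prod_exp_bound:
  fixes t r :: real
  assumes "0 \<le> t" "0 \<le> r" "r < 1"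
  shows "(\<Prod>k<n. 1 + t * r ^ k) \<le> exp (t / (1 - r))"
proof -
  have "(\<Prod>k<n. 1 + t * r ^ k) \<le> (\<Prod>k<n. exp (t * r ^ k))"
    by (intro prod_mono) (use assms in \<open>auto simp: add.commute exp_ge_add_one_self\<close>)
  also have "\<dots> = exp (\<Sum>k<n. t * r ^ k)" by (simp add: exp_sum)
  also have "(\<Sum>k<n. t * r ^ k) = t * (\<Sum>k<n. r ^ k)" by (simp add: sum_distrib_left)
  also have "(\<Sum>k<n. r ^ k) \<le> 1 / (1 - r)"
  proof -
    have "(\<Sum>k<n. r ^ k) = (1 - r ^ n) / (1 - r)" using assms by (simp add: sum_gp_strict)
    also have "\<dots> \<le> 1 / (1 - r)" using assms by (intro divide_right_mono) auto
    finally show ?thesis .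
  qed
  hence "t * (\<Sum>k<n. r ^ k) \<le> t / (1 - r)" using mult_left_mono[OF _ assms(1)] by fastforce
  finally show ?thesis by simp
qed

lemma qpoch_bound:
  assumes "norm q < 1"
  shows "norm (qpoch x q n) \<le> exp (norm x / (1 - norm q))"
proof -
  have "norm (qpoch x q n) = (\<Prod>k<n. norm (1 - x * q ^ k))"
    by (simp add: qpoch_def prod_norm)
  also have "\<dots> \<le> (\<Prod>k<n. 1 + norm x * norm q ^ k)"
  proof (intro prod_mono conjI)
    fix k show "norm (1 - x * q ^ k) \<le> 1 + norm x * norm q ^ k"
      by (metis norm_mult norm_one norm_power norm_triangle_ineq4)
  qed auto
  also have "\<dots> \<le> exp (norm x / (1 - norm q))"
    by (rule real_prod_exp_bound) (use assms in auto)
  finally show ?thesis .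
qed

lemma one_minus_ge_exp:
  fixes t :: real assumes "0 \<le> t" "t \<le> 1/2"
  shows "exp (-2*t) \<le> 1 - t"
proof -
  have "-t - 2*t^2 \<le> ln (1 - t)" using ln_one_minus_pos_lower_bound assms by auto
  moreover have "-2*t \<le> -t - 2*t^2" using assms mult_right_mono[of "2*t" 1 t] by (simp add: power2_eq_square)
  ultimately have "-2*t \<le> ln (1-t)" by linarith
  hence "exp (-2*t) \<le> exp (ln (1-t))" by simp
  also have "\<dots> = 1 - t" using assms by simp
  finally show ?thesis .
qed


lemma geom_sum_le:
  fixes r :: real assumes "0 \<le> r" "r < 1"
  shows "(\<Sum>k<m. r ^ k) \<le> 1 / (1 - r)"
proof -
  have "(\<Sum>k<m. r ^ k) = (1 - r ^ m) / (1 - r)" using assms by (simp add: sum_gp_strict)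
  also have "\<dots> \<le> 1 / (1 - r)" using assms by (intro divide_right_mono) auto
  finally show ?thesis .
qed

lemma qpoch_tail_lower:
  assumes q: "norm q < 1" and small: "norm y \<le> 1/2"
  shows "exp (-2 * norm y / (1 - norm q)) \<le> norm (qpoch y q m)"
proof -
  have "exp (-2 * norm y / (1 - norm q)) \<le> exp (-2 * (\<Sum>k<m. norm y * norm q ^ k))"
  proof -
    have "(\<Sum>k<m. norm y * norm q ^ k) = norm y * (\<Sum>k<m. norm q ^ k)" by (simp add: sum_distrib_left)
    also have "\<dots> \<le> norm y * (1 / (1 - norm q))"
      by (intro mult_left_mono geom_sum_le) (use q in auto)
    finally show ?thesis using q by simp
  qed
  also have "\<dots> = (\<Prod>k<m. exp (-2 * (norm y * norm q ^ k)))"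
    by (simp add: exp_sum[symmetric] sum_distrib_left)
  also have "\<dots> \<le> (\<Prod>k<m. norm (1 - y * q ^ k))"
  proof (intro prod_mono conjI)
    fix k assume "k \<in> {..<m}"
    have nq: "norm q ^ k \<le> 1" using q by (simp add: power_le_one)
    have t: "norm y * norm q ^ k \<le> 1/2"
      using mult_left_mono[OF nq, of "norm y"] small by simp
    have "exp (-2 * (norm y * norm q ^ k)) \<le> 1 - norm y * norm q ^ k"
      by (rule one_minus_ge_exp) (use t in auto)
    also have "\<dots> \<le> norm (1 - y * q ^ k)"
      by (metis norm_mult norm_one norm_power norm_triangle_ineq2)
    finally show "exp (-2 * (norm y * norm q ^ k)) \<le> norm (1 - y * q ^ k)" .
  qed auto
  also have "\<dots> = norm (qpoch y q m)" by (simp add: qpoch_def prod_norm)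
  finally show ?thesis .
qed

lemma qpoch_lower:
  assumes q: "norm q < 1" and nz: "\<And>n. qpoch x q n \<noteq> 0"
  shows "\<exists>\<delta>>0. \<forall>n. \<delta> \<le> norm (qpoch x q n)"
proof -
  have "(\<lambda>K. norm x * norm q ^ K) \<longlonglongrightarrow> norm x * 0"
    by (intro tendsto_mult tendsto_const LIMSEQ_power_zero) (use q in auto)
  then obtain K where K: "norm x * norm q ^ K \<le> 1/2"
  proof -
    from \<open>_ \<longlonglongrightarrow> _\<close> have "eventually (\<lambda>K. norm x * norm q ^ K < 1/2) sequentially"
      by (intro order_tendstoD) auto
    then obtain K where "norm x * norm q ^ K < 1/2" by (auto simp: eventually_sequentially)
    then show ?thesis using that by (meson less_imp_le)
  qed
  define m0 where "m0 = Min ((\<lambda>n. norm (qpoch x q n)) ` {..K})"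
  have m0pos: "m0 > 0" unfolding m0_def using nz by (subst Min_gr_iff) auto
  have m0le: "m0 \<le> norm (qpoch x q n)" if "n \<le> K" for n
    unfolding m0_def using that by (intro Min_le) auto
  define c where "c = exp (-2 * norm (x * q ^ K) / (1 - norm q))"
  have cpos: "c > 0" unfolding c_def by simp
  have cle: "c \<le> 1" unfolding c_def using q by (simp add: divide_nonneg_pos)
  show ?thesis
  proof (intro exI[of _ "m0 * c"] conjI allI)
    show "0 < m0 * c" using m0pos cpos by simp
    fix n show "m0 * c \<le> norm (qpoch x q n)"
    proof (cases "n \<le> K")
      case True
      then show ?thesis using m0le[OF True] cle m0pos
        by (smt (verit) mult_left_le)
    next
      case False
      then obtain m where n: "n = K + m" by (metis le_add_diff_inverse nat_le_linear)
      have sm: "norm (x * q ^ K) \<le> 1/2" using K by (simp add: norm_mult norm_power)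
      have "c \<le> norm (qpoch (x * q ^ K) q m)" unfolding c_def by (rule qpoch_tail_lower[OF q sm])
      hence "m0 * c \<le> norm (qpoch x q K) * norm (qpoch (x * q ^ K) q m)"
        by (intro mult_mono m0le) (use m0pos cpos in auto)
      also have "\<dots> = norm (qpoch x q n)" by (simp add: n qpoch_add norm_mult)
      finally show ?thesis .
    qed
  qed
qed


lemma qpoch_q_nz: "norm q < 1 \<Longrightarrow> qpoch q q n \<noteq> 0"
proof -
  assume q: "norm q < 1"
  have "1 - q * q ^ k \<noteq> 0" for k
  proof
    assume "1 - q * q ^ k = 0"
    hence "norm (q * q ^ k) = 1" by (metis eq_iff_diff_eq_0 norm_one)
    moreover have "norm (q * q ^ k) < 1"
    proof -
      have "norm q ^ k \<le> 1" using q by (simp add: power_le_one)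
      hence "norm q * norm q ^ k \<le> norm q" by (simp add: mult_left_le)
      thus ?thesis using q by (simp add: norm_mult norm_power)
    qed
    ultimately show False by simp
  qed
  thus ?thesis by (simp add: qpoch_def)
qed

lemma wz_scalar:
  fixes c c' x z A U V W :: complex
  assumes "A = x*z" "U = W*V" "c' * (1 - x*V) * (1 - A*V) = c * (1 - V) * x * (1 - z*V)"
  shows "(x - 1) * (c' * (1 - A*U*V) - c*(1 - W))
       = (c' - c) * (x*(1 - z*U)*(1-U) - (1 - W)*(1 - A*U*V))"
proof -
  have "(c' - c) * (x*(1 - z*U)*(1-U) - (1 - W)*(1 - A*U*V)) - (x - 1) * (c' * (1 - A*U*V) - c*(1 - W))
       = W * (c' * (1 - x*V) * (1 - A*V) - c * (1 - V) * x * (1 - z*V))"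
    unfolding assms(1,2) by algebra
  thus ?thesis using assms(3) by simp
qed

definition T0 :: "complex \<Rightarrow> complex \<Rightarrow> complex \<Rightarrow> nat \<Rightarrow> nat \<Rightarrow> complex" where
  "T0 a q z j n = (if j \<le> n \<and> 1 \<le> n then qpoch z q n * qpoch q q (n-1) * (q*a/z)^n
       / (qpoch q q (n-j) * qpoch (q*a) q (n+j)) else 0)"

definition cc :: "complex \<Rightarrow> complex \<Rightarrow> complex \<Rightarrow> nat \<Rightarrow> complex" where
  "cc a q z j = qpoch z q j * qpoch q q (j - 1) / (qpoch (q*a) q j * qpoch (q*a/z) q j) * (q*a/z)^j"

locale qctx =
  fixes a q z :: complex
  assumes q: "norm q < 1"
    and hz: "norm (q * a) < norm z"
    and nz1: "\<And>n. qpoch (q * a) q n \<noteq> 0"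
    and nz2: "\<And>n. qpoch (q * a / z) q n \<noteq> 0"

context qctx
begin

lemma z_nz: "z \<noteq> 0" using hz by auto

lemma x_lt1: "norm (q*a/z) < 1"
  using hz z_nz by (simp add: norm_divide divide_less_eq)

lemma qnz: "qpoch q q n \<noteq> 0" using qpoch_q_nz[OF q] .

lemma fac_nz1: "1 - q * a * q ^ n \<noteq> 0"
  using nz1[of "Suc n"] by (simp add: qpoch_Suc)

lemma fac_nz2: "1 - q * a / z * q ^ n \<noteq> 0"
  using nz2[of "Suc n"] by (simp add: qpoch_Suc)

lemma R1:
  assumes "1 \<le> j" "j \<le> n"
  shows "T0 a q z (Suc j) n * (1 - q*a*q^(n+j)) = T0 a q z j n * (1 - q^(n-j))"
proof (cases "n = j")
  case True thus ?thesis by (simp add: T0_def)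
next
  case False
  define m where "m = n - Suc j"
  have m: "n - j = Suc m" using assms False unfolding m_def by simp
  hence m2: "n - Suc j = m" by simp
  define NN where "NN = qpoch z q n * qpoch q q (n-1) * (q*a/z)^n"
  have n1: "1 \<le> n" using assms by simp
  have t1: "T0 a q z (Suc j) n = NN / (qpoch q q m * (qpoch (q*a) q (n+j) * (1 - q*a*q^(n+j))))"
  proof -
    have c: "Suc j \<le> n \<and> 1 \<le> n" using assms False by simp
    have e: "n + Suc j = Suc (n + j)" by simp
    show ?thesis unfolding T0_def NN_def if_P[OF c] m2 e qpoch_Suc by (simp only: mult.assoc)
  qed
  have t2: "T0 a q z j n = NN / (qpoch q q m * (1 - q^(n-j)) * qpoch (q*a) q (n+j))"
  proof -
    have c: "j \<le> n \<and> 1 \<le> n" using assms False by simp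
    show ?thesis by (simp only: T0_def NN_def if_P[OF c] m qpoch_Suc power_Suc)
  qed
  have f: "1 - q^(n-j) \<noteq> 0" using qnz[of "Suc m"] by (simp add: m qpoch_Suc)
  show ?thesis unfolding t1 t2 using qnz[of m] nz1[of "n+j"] fac_nz1[of "n+j"] f
    by simp
qed

lemma div_helper:
  fixes z1 u1 p1 v1 x1 w1 e1 f1 g1 h1 :: complex
  assumes "e1 \<noteq> 0" "f1 \<noteq> 0" "g1 \<noteq> 0" "h1 \<noteq> 0"
  shows "(z1 * u1) * (p1 * v1) * (x1 * w1) / (e1 * f1 * (g1 * h1)) * f1 * h1 = z1 * p1 * x1 / (e1 * g1) * u1 * v1 * w1"
  using assms by (simp add: field_simps)

lemma R2:
  assumes "1 \<le> j" "j \<le> n"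
  shows "T0 a q z j (Suc n) * (1 - q*q^(n-j)) * (1 - q*a*q^(n+j))
       = T0 a q z j n * (1 - z*q^n) * (1 - q^n) * (q*a/z)"
proof -
  define p where "p = n - 1"
  have p: "n = Suc p" using assms unfolding p_def by simp
  have t1: "T0 a q z j (Suc n) = (qpoch z q n * (1 - z*q^n)) * (qpoch q q p * (1 - q^n)) * ((q*a/z)^n * (q*a/z))
      / (qpoch q q (n-j) * (1 - q*q^(n-j)) * (qpoch (q*a) q (n+j) * (1 - q*a*q^(n+j))))"
  proof -
    have e1: "Suc n - j = Suc (n - j)" using assms by simp
    have e3: "Suc n - 1 = Suc p" using p by auto
    have c: "j \<le> Suc n \<and> 1 \<le> Suc n" using assms by simp
    have e2: "Suc n + j = Suc (n + j)" by simp
    have hq: "q * q ^ p = q ^ n" using p by simp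
    show ?thesis by (simp only: T0_def if_P[OF c] e1 e2 e3 qpoch_Suc hq power_Suc2)
  qed
  have t2: "T0 a q z j n = qpoch z q n * qpoch q q p * (q*a/z)^n / (qpoch q q (n-j) * qpoch (q*a) q (n+j))"
  proof -
    have c: "j \<le> n \<and> 1 \<le> n" using assms by simp
    have e3: "n - 1 = p" using p by auto
    show ?thesis by (simp only: T0_def if_P[OF c] e3)
  qed
  have f: "1 - q*q^(n-j) \<noteq> 0" using qnz[of "Suc (n-j)"] by (simp add: qpoch_Suc)
  show ?thesis unfolding t1 t2
    by (rule div_helper) (use qnz[of "n-j"] nz1[of "n+j"] fac_nz1[of "n+j"] f in auto)
qed

end


lemma div_helper2:
  fixes z1 u1 p1 v1 a1 f1 x1 g1 w1 w2 :: complex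
  assumes "a1 \<noteq> 0" "f1 \<noteq> 0" "x1 \<noteq> 0" "g1 \<noteq> 0"
  shows "(z1 * u1) * (p1 * v1) / ((a1 * f1) * (x1 * g1)) * (w1 * w2) * f1 * g1
       = z1 * p1 / (a1 * x1) * w1 * u1 * v1 * w2"
  using assms by (simp add: field_simps)

lemma base_helper:
  fixes Z U X A f Q x z qa :: complex
  assumes "A \<noteq> 0" "f \<noteq> 0" "Q \<noteq> 0" "z * x = qa" "f = 1 - qa * U"
  shows "Z * (1 - z * U) * (X * x) / (A * f) - Z * X / A = (x - 1) * (Z * Q * X / (Q * (A * f)))"
proof -
  have "Z * (1 - z * U) * (X * x) / (A * f) - Z * X / A = Z * X * ((1 - z*U) * x - f) / (A * f)"
    using assms(1,2) by (simp add: field_simps)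
  also have "(1 - z*U) * x - f = x - 1" using assms(4,5) by (simp add: algebra_simps)
  finally show ?thesis using assms(1,2,3) by (simp add: field_simps)
qed

lemma neg_div_helper:
  fixes c y b x :: complex
  shows "- (c * y / b) / (x - 1) = c * 1 / (b * (1 - x)) * y"
proof (cases "b = 0 \<or> x = 1")
  case True thus ?thesis by auto
next
  case False
  hence "b \<noteq> 0" "1 - x \<noteq> 0" "x - 1 \<noteq> 0" by auto
  thus ?thesis by (simp add: field_simps)
qed

context qctx
begin

lemma x_nz1: "q * a / z \<noteq> 1" using x_lt1 by auto

lemma cc_ratio:
  assumes "1 \<le> j"
  shows "cc a q z (Suc j) * (1 - q*a*q^j) * (1 - q*a/z*q^j) = cc a q z j * (1 - z*q^j) * (1 - q^j) * (q*a/z)"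
proof -
  define i where "i = j - 1"
  have ji: "j = Suc i" using assms unfolding i_def by simp
  have t1: "cc a q z (Suc j) = (qpoch z q j * (1 - z*q^j)) * (qpoch q q i * (1 - q^j))
      / ((qpoch (q*a) q j * (1 - q*a*q^j)) * (qpoch (q*a/z) q j * (1 - q*a/z*q^j))) * ((q*a/z)^j * (q*a/z))"
  proof -
    have e: "Suc j - 1 = Suc i" using ji by simp
    have hq: "q * q ^ i = q ^ j" using ji by simp
    show ?thesis by (simp only: cc_def e qpoch_Suc hq power_Suc2)
  qed
  have t2: "cc a q z j = qpoch z q j * qpoch q q i / (qpoch (q*a) q j * qpoch (q*a/z) q j) * (q*a/z)^j"
    unfolding cc_def i_def ..
  show ?thesis unfolding t1 t2
    by (rule div_helper2) (use nz1 nz2 fac_nz1 fac_nz2 in auto)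
qed

lemma T0_base_sums: "(\<lambda>n. T0 a q z 1 n) sums cc a q z 1"
proof -
  define x where "x = q*a/z"
  define Gb where "Gb n = qpoch z q (max n 1) * x^(max n 1) / qpoch (q*a) q (max n 1)" for n
  obtain \<delta> where dpos: "\<delta> > 0" and dl: "\<And>n. \<delta> \<le> norm (qpoch (q*a) q n)"
    using qpoch_lower[OF q nz1] by blast
  define E where "E = exp (norm z / (1 - norm q))"
  have tel: "Gb (Suc n) - Gb n = (x - 1) * T0 a q z 1 n" for n
  proof (cases "n = 0")
    case True thus ?thesis by (simp add: Gb_def T0_def)
  next
    case False
    hence mx: "max (Suc n) 1 = Suc n" "max n 1 = n" by auto
    have "Gb (Suc n) - Gb n = qpoch z q n * (1 - z * q^n) * (x^n * x) / (qpoch (q*a) q n * (1 - q*a*q^n))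
       - qpoch z q n * x^n / qpoch (q*a) q n"
      unfolding Gb_def mx qpoch_Suc power_Suc2 ..
    also have "\<dots> = (x - 1) * (qpoch z q n * qpoch q q (n-1) * x^n / (qpoch q q (n-1) * (qpoch (q*a) q n * (1 - q*a*q^n))))"
      by (rule base_helper) (use nz1 fac_nz1 qnz z_nz in \<open>auto simp: x_def\<close>)
    also have "\<dots> = (x - 1) * T0 a q z 1 n"
    proof -
      have c: "1 \<le> n \<and> 1 \<le> n" using False by simp
      have e: "n + 1 = Suc n" by simp
      show ?thesis unfolding T0_def if_P[OF c] e qpoch_Suc x_def by simp
    qed
    finally show ?thesis .
  qed
  have lim: "Gb \<longlonglongrightarrow> 0"
  proof (rule Lim_null_comparison)
    show "\<forall>\<^sub>F n in sequentially. norm (Gb n) \<le> E / \<delta> * norm x ^ n"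
    proof (rule eventually_sequentiallyI[of 1])
      fix n :: nat assume n: "1 \<le> n"
      hence mx: "max n 1 = n" by simp
      have "norm (Gb n) = norm (qpoch z q n) * norm x ^ n / norm (qpoch (q*a) q n)"
        unfolding Gb_def mx by (simp add: norm_mult norm_divide norm_power)
      also have "\<dots> \<le> E * norm x ^ n / \<delta>"
        by (intro frac_le mult_right_mono dl dpos) (auto simp: E_def qpoch_bound[OF q])
      finally show "norm (Gb n) \<le> E / \<delta> * norm x ^ n" by simp
    qed
    show "(\<lambda>n. E / \<delta> * norm x ^ n) \<longlonglongrightarrow> 0"
      by (intro tendsto_mult_right_zero LIMSEQ_power_zero) (use x_lt1 in \<open>simp add: x_def\<close>)
  qed
  have "(\<lambda>n. Gb (Suc n) - Gb n) sums (0 - Gb 0)" by (rule telescope_sums[OF lim])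
  hence "(\<lambda>n. (x - 1) * T0 a q z 1 n) sums (- Gb 0)" by (simp add: tel)
  hence "(\<lambda>n. (1 / (x - 1)) * ((x - 1) * T0 a q z 1 n)) sums ((1 / (x - 1)) * (- Gb 0))"
    by (rule sums_mult)
  moreover have "x - 1 \<noteq> 0" using x_nz1 by (simp add: x_def)
  ultimately have "(\<lambda>n. T0 a q z 1 n) sums (- Gb 0 / (x - 1))" by simp
  moreover have "- Gb 0 / (x - 1) = cc a q z 1"
  proof -
    have "x - 1 = -(1 - x)" by simp
    hence h: "- Gb 0 / (x - 1) = Gb 0 / (1 - x)" by (simp only: divide_minus_right minus_minus divide_minus_left)
    have g0: "Gb 0 = (1 - z) * x / (1 - q * a)" by (simp add: Gb_def qpoch_def)
    have c1: "cc a q z 1 = (1 - z) * 1 / ((1 - q*a) * (1 - x)) * x" by (simp add: cc_def qpoch_def x_def)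
    have n1: "1 - x \<noteq> 0" "x - 1 \<noteq> 0" using x_nz1 by (auto simp: x_def)
    have n2: "1 - q * a \<noteq> 0" using fac_nz1[of 0] by simp
    show ?thesis unfolding g0 c1 by (rule neg_div_helper)
  qed
  ultimately show ?thesis by simp
qed

lemma T0_zero_below: "n < j \<Longrightarrow> T0 a q z j n = 0"
  by (simp add: T0_def)

lemma T0_0: "T0 a q z j 0 = 0"
  by (simp add: T0_def)

lemma T0_sums:
  assumes "1 \<le> j"
  shows "(\<lambda>n. T0 a q z j n) sums cc a q z j"
  using assms
proof (induction j rule: nat_induct_at_least)
  case base show ?case using T0_base_sums .
next
  case (Suc j)
  define x where "x = q*a/z"
  define c where "c = cc a q z j"
  define c' where "c' = cc a q z (Suc j)"
  define K where "K = (c' - c) / (x - 1)"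
  define H where "H n = K * (1 - q^(n-j)) * T0 a q z j n" for n
  have xn1: "x - 1 \<noteq> 0" using x_nz1 by (simp add: x_def)
  have key: "c' * T0 a q z j n - c * T0 a q z (Suc j) n = H (Suc n) - H n" for n
  proof (cases "j \<le> n")
    case False
    hence z1: "T0 a q z j n = 0" "T0 a q z (Suc j) n = 0" by (simp_all add: T0_def)
    have "H (Suc n) = 0"
    proof (cases "Suc n = j")
      case True thus ?thesis by (simp add: H_def)
    next
      case False
      hence "T0 a q z j (Suc n) = 0" using \<open>\<not> j \<le> n\<close> by (simp add: T0_def)
      thus ?thesis by (simp add: H_def)
    qed
    thus ?thesis by (simp add: z1 H_def)
  next
    case True
    define D where "D = 1 - q*a*q^(n+j)"
    define W where "W = q^(n-j)"
    define U where "U = q^n"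
    define V where "V = q^j"
    have Dnz: "D \<noteq> 0" unfolding D_def by (rule fac_nz1)
    have r1: "T0 a q z (Suc j) n * D = T0 a q z j n * (1 - W)"
      unfolding D_def W_def by (rule R1) (use Suc True in auto)
    have r2: "T0 a q z j (Suc n) * (1 - q*W) * D = T0 a q z j n * (1 - z*U) * (1 - U) * x"
      unfolding D_def W_def U_def x_def by (rule R2) (use Suc True in auto)
    have hs: "H (Suc n) = K * (1 - q*W) * T0 a q z j (Suc n)"
    proof -
      have "Suc n - j = Suc (n - j)" using True by simp
      thus ?thesis by (simp add: H_def W_def)
    qed
    have scal: "(x - 1) * (c' * (1 - (q*a)*U*V) - c*(1 - W))
       = (c' - c) * (x*(1 - z*U)*(1-U) - (1 - W)*(1 - (q*a)*U*V))"
    proof (rule wz_scalar)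
      show "q * a = x * z" using z_nz by (simp add: x_def)
      show "U = W * V" using True by (simp add: U_def W_def V_def power_add[symmetric])
      show "c' * (1 - x * V) * (1 - q * a * V) = c * (1 - V) * x * (1 - z * V)"
        using cc_ratio[of j] Suc by (simp add: c_def c'_def x_def V_def mult_ac)
    qed
    have DUV: "D = 1 - (q*a)*U*V" by (simp add: D_def U_def V_def power_add mult_ac)
    have scal2: "c' * D - c*(1 - W) = K * (x*(1 - z*U)*(1-U) - (1 - W)*D)"
      using scal xn1 unfolding DUV K_def by (simp add: field_simps)
    have "(c' * T0 a q z j n - c * T0 a q z (Suc j) n) * D
        = c' * T0 a q z j n * D - c * (T0 a q z (Suc j) n * D)" by (simp add: algebra_simps)
    also have "\<dots> = c' * T0 a q z j n * D - c * (T0 a q z j n * (1 - W))" by (simp only: r1)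
    also have "\<dots> = T0 a q z j n * (c' * D - c*(1 - W))" by (simp add: algebra_simps)
    also have "\<dots> = T0 a q z j n * K * (x*(1 - z*U)*(1-U) - (1 - W)*D)" by (simp add: scal2)
    also have "\<dots> = K * (T0 a q z j (Suc n) * (1 - q*W) * D) - K * (1 - W) * T0 a q z j n * D"
      unfolding r2 by (simp add: algebra_simps)
    also have "\<dots> = (H (Suc n) - H n) * D"
      unfolding hs by (simp add: H_def W_def algebra_simps)
    finally show ?thesis using Dnz by simp
  qed
  have T0lim: "(\<lambda>n. T0 a q z j n) \<longlonglongrightarrow> 0"
    using Suc.IH by (intro summable_LIMSEQ_zero sums_summable)
  have Hlim: "H \<longlonglongrightarrow> 0"
  proof (rule Lim_null_comparison)
    show "\<forall>\<^sub>F n in sequentially. norm (H n) \<le> norm K * 2 * norm (T0 a q z j n)"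
    proof (intro always_eventually allI)
      fix n
      have "norm (1 - q^(n-j)) \<le> 2"
      proof -
        have "norm (1 - q^(n-j)) \<le> 1 + norm q ^ (n-j)"
          by (metis norm_one norm_power norm_triangle_ineq4)
        also have "norm q ^ (n-j) \<le> 1" using q by (simp add: power_le_one)
        finally show ?thesis by simp
      qed
      thus "norm (H n) \<le> norm K * 2 * norm (T0 a q z j n)"
        unfolding H_def norm_mult by (intro mult_right_mono mult_left_mono) auto
    qed
    show "(\<lambda>n. norm K * 2 * norm (T0 a q z j n)) \<longlonglongrightarrow> 0"
      by (intro tendsto_mult_right_zero tendsto_norm_zero T0lim)
  qed
  have H0: "H 0 = 0" by (simp add: H_def T0_0)
  have "(\<lambda>n. H (Suc n) - H n) sums (0 - H 0)" by (rule telescope_sums[OF Hlim])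
  hence s1: "(\<lambda>n. c' * T0 a q z j n - c * T0 a q z (Suc j) n) sums 0" by (simp add: key H0)
  have s2: "(\<lambda>n. c' * T0 a q z j n) sums (c' * c)" unfolding c_def by (rule sums_mult[OF Suc.IH])
  have "(\<lambda>n. c' * T0 a q z j n - (c' * T0 a q z j n - c * T0 a q z (Suc j) n)) sums (c' * c - 0)"
    by (rule sums_diff[OF s2 s1])
  hence s3: "(\<lambda>n. c * T0 a q z (Suc j) n) sums (c' * c)" by simp
  show ?case
  proof (cases "c = 0")
    case False
    have "(\<lambda>n. (1/c) * (c * T0 a q z (Suc j) n)) sums ((1/c) * (c' * c))" by (rule sums_mult[OF s3])
    thus ?thesis using False by (simp add: c'_def)
  next
    case True
    have c'0: "c' = 0"
      using cc_ratio[of j] Suc True fac_nz1[of j] fac_nz2[of j] z_nz by (simp add: c_def c'_def)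
    have zx: "qpoch z q j * x ^ j = 0"
      using True qnz[of "j-1"] nz1[of j] nz2[of j] by (simp add: c_def cc_def x_def)
    have "T0 a q z (Suc j) n = 0" for n
    proof (cases "Suc j \<le> n")
      case False thus ?thesis by (simp add: T0_def)
    next
      case True
      define m where "m = n - j"
      have nm: "n = j + m" using True unfolding m_def by simp
      have "qpoch z q n * x ^ n = (qpoch z q j * x ^ j) * (qpoch (z * q ^ j) q m * x ^ m)"
        unfolding nm qpoch_add power_add by (simp add: mult_ac)
      hence "qpoch z q n * x ^ n = 0" using zx by simp
      thus ?thesis unfolding T0_def x_def by auto
    qed
    thus ?thesis using c'0 by (simp add: c'_def)
  qed
qed

end


lemma qpoch_bound_le:
  assumes "norm q < 1" "norm y \<le> t"
  shows "norm (qpoch y q m) \<le> exp (t / (1 - norm q))"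
proof -
  have "norm (qpoch y q m) \<le> exp (norm y / (1 - norm q))" by (rule qpoch_bound[OF assms(1)])
  also have "\<dots> \<le> exp (t / (1 - norm q))" using assms by (intro exp_mono divide_right_mono) auto
  finally show ?thesis .
qed

lemma div_helper3:
  fixes z1 z2 p1 p2 y1 y2 q1 r1 a1 x1 :: complex
  assumes "a1 \<noteq> 0" "x1 \<noteq> 0"
  shows "(z1 * z2) * (p1 * p2) * (y1 * y2) / (q1 * r1)
       = z1 * p1 / (a1 * x1) * y1 * (z2 * p2 * y2 * x1 * a1 / (q1 * r1))"
  using assms by (simp add: field_simps)

context qctx
begin

definition rho :: "nat \<Rightarrow> nat \<Rightarrow> complex" where
  "rho j n = qpoch (z*q^j) q (n-j) * qpoch (q*q^(j-1)) q (n-j) * (q*a/z)^(n-j)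
     * qpoch (q*a/z) q j * qpoch (q*a) q j / (qpoch q q (n-j) * qpoch (q*a) q (n+j))"

lemma T0_factor:
  assumes "1 \<le> j" "j \<le> n"
  shows "T0 a q z j n = cc a q z j * rho j n"
proof -
  define m where "m = n - j"
  have nm: "n = j + m" using assms unfolding m_def by simp
  have n1: "n - 1 = (j - 1) + m" using assms unfolding m_def by simp
  have qj: "q * q ^ (j - 1) = q ^ (j-1) * q" by (simp add: mult.commute)
  have c: "j \<le> n \<and> 1 \<le> n" using assms by simp
  have "T0 a q z j n = (qpoch z q j * qpoch (z*q^j) q m) * (qpoch q q (j-1) * qpoch (q*q^(j-1)) q m)
        * ((q*a/z)^j * (q*a/z)^m) / (qpoch q q m * qpoch (q*a) q (n+j))"
    unfolding T0_def if_P[OF c] n1 qpoch_add m_def[symmetric] unfolding nm qpoch_add power_add qj ..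
  also have "\<dots> = cc a q z j * rho j n"
    unfolding cc_def rho_def m_def[symmetric]
    by (rule div_helper3) (use nz1 nz2 in auto)
  finally show ?thesis .
qed

lemma T0_bound:
  "\<exists>C>0. \<forall>j n. norm (T0 a q z j n) \<le> C * (if j = 0 then 1 else norm (cc a q z j)) * norm (q*a/z) ^ (n - j)"
proof -
  define r where "r = norm (q*a/z)"
  have r: "0 \<le> r" "r < 1" using x_lt1 by (auto simp: r_def)
  obtain dq where dq: "dq > 0" "\<And>n. dq \<le> norm (qpoch q q n)"
    using qpoch_lower[OF q qnz] by blast
  obtain da where da: "da > 0" "\<And>n. da \<le> norm (qpoch (q*a) q n)"
    using qpoch_lower[OF q nz1] by blast
  define Ez where "Ez = exp (norm z / (1 - norm q))"
  define E1 where "E1 = exp (1 / (1 - norm q))"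
  define Ea where "Ea = exp (norm (q*a) / (1 - norm q))"
  have E1ge: "1 \<le> E1" "1 \<le> Ea" using q by (auto simp: E1_def Ea_def)
  have Epos: "Ez > 0" "E1 > 0" "Ea > 0" by (auto simp: Ez_def E1_def Ea_def)
  define C where "C = Ez * E1 * E1 * Ea / (dq * da)"
  have Cpos: "C > 0" using Epos dq da by (simp add: C_def)
  have bnd: "norm (T0 a q z j n) \<le> C * (if j = 0 then 1 else norm (cc a q z j)) * r ^ (n - j)" for j n
  proof (cases "j \<le> n \<and> 1 \<le> n")
    case False
    hence "T0 a q z j n = 0" by (auto simp: T0_def)
    thus ?thesis using Cpos r by simp
  next
    case True
    show ?thesis
    proof (cases "j = 0")
      case j0: True
      have "norm (T0 a q z j n) = norm (qpoch z q n) * norm (qpoch q q (n-1)) * r ^ n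
            / (norm (qpoch q q n) * norm (qpoch (q*a) q n))"
        using True j0 by (simp add: T0_def norm_mult norm_divide norm_power r_def)
      also have "\<dots> \<le> (Ez * E1 * r ^ n) / (dq * da)"
      proof (intro frac_le mult_mono mult_pos_pos)
        show "norm (qpoch z q n) \<le> Ez" unfolding Ez_def by (rule qpoch_bound_le[OF q]) simp
        show "norm (qpoch q q (n-1)) \<le> E1" unfolding E1_def by (rule qpoch_bound_le[OF q]) (use q in simp)
      qed (use dq da Epos r in auto)
      also have "\<dots> \<le> C * r ^ n"
      proof -
        have "Ez * E1 * r ^ n \<le> Ez * E1 * E1 * Ea * r ^ n"
        proof -
          have e: "1 \<le> E1 * Ea" using mult_mono[of 1 E1 1 Ea] E1ge by simp
          have nn: "0 \<le> Ez * E1 * r ^ n" using Epos r by simp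
          show ?thesis using mult_right_mono[OF e nn] by (simp add: mult_ac)
        qed
        thus ?thesis unfolding C_def using dq da
          by (simp add: divide_right_mono field_simps)
      qed
      finally show ?thesis using j0 by simp
    next
      case False
      have jn: "1 \<le> j" "j \<le> n" using False True by auto
      have "norm (rho j n) = norm (qpoch (z*q^j) q (n-j)) * norm (qpoch (q*q^(j-1)) q (n-j)) * r^(n-j)
           * norm (qpoch (q*a/z) q j) * norm (qpoch (q*a) q j) / (norm (qpoch q q (n-j)) * norm (qpoch (q*a) q (n+j)))"
        by (simp add: rho_def norm_mult norm_divide norm_power r_def)
      also have "\<dots> \<le> Ez * E1 * r^(n-j) * E1 * Ea / (dq * da)"
      proof (intro frac_le mult_mono mult_pos_pos)
        have "norm q ^ j \<le> 1" using q by (simp add: power_le_one)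
        hence "norm z * norm q ^ j \<le> norm z" by (simp add: mult_left_le)
        thus "norm (qpoch (z*q^j) q (n-j)) \<le> Ez" unfolding Ez_def
          by (intro qpoch_bound_le[OF q]) (simp add: norm_mult norm_power)
        have "norm q ^ (j-1) \<le> 1" using q by (simp add: power_le_one)
        hence "norm q * norm q ^ (j-1) \<le> 1" using q
          by (metis less_eq_real_def mult_le_one norm_ge_zero zero_le_power)
        thus "norm (qpoch (q*q^(j-1)) q (n-j)) \<le> E1" unfolding E1_def
          by (intro qpoch_bound_le[OF q]) (simp add: norm_mult norm_power)
        show "norm (qpoch (q*a/z) q j) \<le> E1" unfolding E1_def
          by (intro qpoch_bound_le[OF q]) (use x_lt1 in simp)
        show "norm (qpoch (q*a) q j) \<le> Ea" unfolding Ea_def by (intro qpoch_bound_le[OF q]) simp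
      qed (use dq da Epos r in auto)
      also have "\<dots> = C * r ^ (n-j)" by (simp add: C_def field_simps)
      finally have rb: "norm (rho j n) \<le> C * r ^ (n-j)" .
      have "norm (T0 a q z j n) = norm (cc a q z j) * norm (rho j n)"
        by (simp add: T0_factor[OF jn] norm_mult)
      also have "\<dots> \<le> norm (cc a q z j) * (C * r ^ (n-j))" by (intro mult_left_mono rb) auto
      finally show ?thesis using False by (simp add: mult_ac)
    qed
  qed
  thus ?thesis using Cpos unfolding r_def by blast
qed

end


lemma div_helper4:
  fixes Z Q X F A :: complex
  assumes "Q \<noteq> 0"
  shows "Z * Q * X / ((Q * F) * A) = Z / (A * F) * X"
  using assms by (cases "A = 0"; cases "F = 0") (auto simp: field_simps)

context qctx
begin

lemma main_lemma:
  fixes \<alpha> \<beta> :: "nat \<Rightarrow> complex"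
  assumes a0: "\<alpha> 0 = 1"
    and bdef: "\<And>n. n > 0 \<Longrightarrow> \<beta> n = (\<Sum>j\<le>n. \<alpha> j / (qpoch q q (n - j) * qpoch (a * q) q (n + j)))"
    and ac2: "summable (\<lambda>n. norm (qpoch z q (Suc n) * qpoch q q n
                 / (qpoch (q * a) q (Suc n) * qpoch (q * a / z) q (Suc n))
                 * (q * a / z) ^ Suc n * \<alpha> (Suc n)))"
    and ac4: "summable (\<lambda>n. norm (qpoch z q (Suc n) / (qpoch (q * a) q (Suc n) * (1 - q ^ Suc n))
                 * (q * a / z) ^ Suc n))"
  shows "(\<Sum>n. qpoch z q (Suc n) * qpoch q q n * (q * a / z) ^ Suc n * \<beta> (Suc n))
             - (\<Sum>n. qpoch z q (Suc n) * qpoch q q n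
                 / (qpoch (q * a) q (Suc n) * qpoch (q * a / z) q (Suc n))
                 * (q * a / z) ^ Suc n * \<alpha> (Suc n))
        = (\<Sum>n. qpoch z q (Suc n) / (qpoch (q * a) q (Suc n) * (1 - q ^ Suc n)) * (q * a / z) ^ Suc n)"
proof -
  define r where "r = norm (q*a/z)"
  have r: "0 \<le> r" "r < 1" using x_lt1 by (auto simp: r_def)
  obtain C where Cpos: "C > 0" and Cb: "\<And>j n. norm (T0 a q z j n)
      \<le> C * (if j = 0 then 1 else norm (cc a q z j)) * r ^ (n - j)"
    using T0_bound unfolding r_def by blast
  define f where "f p = T0 a q z (fst p) (snd p) * \<alpha> (fst p)" for p :: "nat \<times> nat"
  define A where "A j = (if j = 0 then 1 else norm (cc a q z j * \<alpha> j))" for j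
  define B where "B p = (if fst p \<le> snd p then C * A (fst p) * r ^ (snd p - fst p) else 0)" for p :: "nat \<times> nat"
  define S2 where "S2 = (\<Sum>n. qpoch z q (Suc n) / (qpoch (q * a) q (Suc n) * (1 - q ^ Suc n)) * (q * a / z) ^ Suc n)"
  have Anonneg: "A j \<ge> 0" for j by (simp add: A_def)
  have Bnonneg: "B p \<ge> 0" for p using Cpos Anonneg r by (simp add: B_def)
  have fB: "norm (f p) \<le> B p" for p
  proof (cases p)
    case (Pair j n)
    show ?thesis
    proof (cases "j \<le> n")
      case False
      hence "T0 a q z j n = 0" by (simp add: T0_def)
      thus ?thesis using Pair False by (simp add: f_def B_def)
    next
      case True
      have "norm (f p) = norm (T0 a q z j n) * norm (\<alpha> j)" by (simp add: Pair f_def norm_mult)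
      also have "\<dots> \<le> C * (if j = 0 then 1 else norm (cc a q z j)) * r ^ (n - j) * norm (\<alpha> j)"
        by (intro mult_right_mono Cb) auto
      also have "\<dots> = B p" using True a0 by (auto simp: B_def A_def Pair norm_mult)
      finally show ?thesis .
    qed
  qed
  have ccA: "cc a q z (Suc n) * \<alpha> (Suc n) = qpoch z q (Suc n) * qpoch q q n
                 / (qpoch (q * a) q (Suc n) * qpoch (q * a / z) q (Suc n))
                 * (q * a / z) ^ Suc n * \<alpha> (Suc n)" for n
    by (simp add: cc_def)
  have Asum: "summable A"
  proof -
    have "summable (\<lambda>n. A (Suc n))" using ac2 by (simp add: A_def ccA)
    thus ?thesis by (simp add: summable_Suc_iff)
  qed
  have Binner: "(\<lambda>n. B (j, n)) sums (C * A j / (1 - r))" for j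
  proof -
    have "(\<lambda>i. C * A j * r ^ i) sums (C * A j * (1 / (1 - r)))"
      by (intro sums_mult geometric_sums) (use r in auto)
    hence "(\<lambda>i. B (j, i + j)) sums (C * A j / (1 - r))" by (simp add: B_def)
    hence "(\<lambda>n. B (j, n)) sums (C * A j / (1 - r) + (\<Sum>i<j. B (j, i)))" by (rule sums_iff_shift[of "\<lambda>n. B (j, n)" j, THEN iffD1])
    moreover have "(\<Sum>i<j. B (j, i)) = 0" by (intro sum.neutral) (auto simp: B_def)
    ultimately show ?thesis by simp
  qed
  have Bsum: "B summable_on UNIV"
  proof -
    have "B summable_on Sigma UNIV (\<lambda>_. UNIV)"
    proof (rule summable_on_SigmaI[where g = "\<lambda>j. C * A j / (1 - r)"])
      show "((\<lambda>n. B (j, n)) has_sum C * A j / (1 - r)) UNIV" for j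
        by (rule sums_nonneg_imp_has_sum[OF Binner]) (rule Bnonneg)
      have "summable (\<lambda>j. C * A j / (1 - r))" by (intro summable_divide summable_mult Asum)
      hence "(\<lambda>j. C * A j / (1 - r)) sums (\<Sum>j. C * A j / (1 - r))" by (rule summable_sums)
      hence "((\<lambda>j. C * A j / (1 - r)) has_sum (\<Sum>j. C * A j / (1 - r))) UNIV"
        by (rule sums_nonneg_imp_has_sum) (use Cpos Anonneg r in auto)
      thus "(\<lambda>j. C * A j / (1 - r)) summable_on UNIV" by (rule has_sum_imp_summable)
    qed (use Bnonneg in auto)
    thus ?thesis by simp
  qed
  have fabs: "(\<lambda>p. norm (f p)) summable_on UNIV"
  proof (rule Infinite_Sum.abs_summable_on_comparison_test[where g = B])
    show "(\<lambda>p. norm (B p)) summable_on UNIV" using Bsum Bnonneg by simp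
    show "norm (f x) \<le> norm (B x)" for x using fB[of x] Bnonneg[of x] by simp
  qed
  have fsum: "f summable_on UNIV" by (rule abs_summable_summable[OF fabs])
  define Tot where "Tot = infsum f UNIV"
  have fhas: "(f has_sum Tot) (Sigma UNIV (\<lambda>_. UNIV))"
    using has_sum_infsum[OF fsum] by (simp add: Tot_def)
  define Sj where "Sj j = (if j = 0 then S2 else cc a q z j * \<alpha> j)" for j
  have inner_j: "((\<lambda>n. f (j, n)) has_sum Sj j) UNIV" for j
  proof (rule norm_summable_imp_has_sum)
    show "summable (\<lambda>n. norm (f (j, n)))"
      by (rule summable_comparison_test'[OF sums_summable[OF Binner[of j]], of 0]) (use fB in auto)
    show "(\<lambda>n. f (j, n)) sums Sj j"
    proof (cases "j = 0")
      case True
      have sm: "summable (\<lambda>n. qpoch z q (Suc n) / (qpoch (q * a) q (Suc n) * (1 - q ^ Suc n)) * (q * a / z) ^ Suc n)"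
        by (rule summable_norm_cancel[OF ac4])
      have eq: "T0 a q z 0 (Suc n) = qpoch z q (Suc n) / (qpoch (q * a) q (Suc n) * (1 - q ^ Suc n)) * (q * a / z) ^ Suc n" for n
      proof -
        have c: "0 \<le> Suc n \<and> 1 \<le> Suc n" by simp
        have e: "Suc n - 0 = Suc n" "Suc n - 1 = n" "Suc n + 0 = Suc n" by simp_all
        have qs: "qpoch q q (Suc n) = qpoch q q n * (1 - q ^ Suc n)" by (simp add: qpoch_Suc)
        show ?thesis unfolding T0_def if_P[OF c] e qs by (rule div_helper4[OF qnz])
      qed
      have "(\<lambda>n. T0 a q z 0 (Suc n)) sums S2" unfolding eq S2_def by (rule summable_sums[OF sm])
      hence "(\<lambda>n. T0 a q z 0 n) sums (S2 + T0 a q z 0 0)" by (simp only: sums_Suc_iff)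
      thus ?thesis using True a0 by (simp add: f_def Sj_def T0_0)
    next
      case False
      have "(\<lambda>n. T0 a q z j n * \<alpha> j) sums (cc a q z j * \<alpha> j)"
        by (rule sums_mult2[OF T0_sums]) (use False in auto)
      thus ?thesis using False by (simp add: f_def Sj_def)
    qed
  qed
  have "(Sj has_sum Tot) UNIV" by (rule has_sum_Sigma'[OF fhas]) (rule inner_j)
  hence "Sj sums Tot" by (rule has_sum_imp_sums)
  hence "(\<lambda>j. Sj (Suc j)) sums (Tot - Sj 0)" by (simp add: sums_Suc_iff)
  hence ac2sums: "(\<lambda>n. qpoch z q (Suc n) * qpoch q q n
                 / (qpoch (q * a) q (Suc n) * qpoch (q * a / z) q (Suc n))
                 * (q * a / z) ^ Suc n * \<alpha> (Suc n)) sums (Tot - S2)"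
    by (simp add: Sj_def ccA)
  have fswap: "((\<lambda>(n, j). f (j, n)) has_sum Tot) (Sigma UNIV (\<lambda>_. UNIV))"
    using fhas has_sum_swap[where f=f and S=Tot and A=UNIV and B=UNIV] by simp
  define R where "R n = (\<Sum>j\<le>n. f (j, n))" for n
  have inner_n: "((\<lambda>j. (\<lambda>(n, j). f (j, n)) (n, j)) has_sum R n) UNIV" for n
    by (rule has_sum_finite_neutralI[of "{..n}"]) (auto simp: R_def f_def T0_def)
  have "(R has_sum Tot) UNIV" by (rule has_sum_Sigma'[OF fswap]) (rule inner_n)
  hence "R sums Tot" by (rule has_sum_imp_sums)
  moreover have "R 0 = 0" by (simp add: R_def f_def T0_0)
  ultimately have Rs: "(\<lambda>n. R (Suc n)) sums Tot" by (simp add: sums_Suc_iff)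
  have Req: "R (Suc n) = qpoch z q (Suc n) * qpoch q q n * (q * a / z) ^ Suc n * \<beta> (Suc n)" for n
  proof -
    have "R (Suc n) = (\<Sum>j\<le>Suc n. qpoch z q (Suc n) * qpoch q q n * (q * a / z) ^ Suc n
          * (\<alpha> j / (qpoch q q (Suc n - j) * qpoch (a * q) q (Suc n + j))))"
      unfolding R_def f_def by (intro sum.cong refl) (auto simp: T0_def mult.commute[of q a])
    also have "\<dots> = qpoch z q (Suc n) * qpoch q q n * (q * a / z) ^ Suc n
          * (\<Sum>j\<le>Suc n. \<alpha> j / (qpoch q q (Suc n - j) * qpoch (a * q) q (Suc n + j)))"
      by (rule sum_distrib_left[symmetric])
    also have "\<dots> = qpoch z q (Suc n) * qpoch q q n * (q * a / z) ^ Suc n * \<beta> (Suc n)"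
      unfolding bdef[of "Suc n", OF zero_less_Suc] by (rule refl)
    finally show ?thesis .
  qed
  have bsums: "(\<lambda>n. qpoch z q (Suc n) * qpoch q q n * (q * a / z) ^ Suc n * \<beta> (Suc n)) sums Tot"
    using Rs by (simp add: Req)
  have e1: "(\<Sum>n. qpoch z q (Suc n) * qpoch q q n * (q * a / z) ^ Suc n * \<beta> (Suc n)) = Tot"
    by (rule sums_unique[OF bsums, symmetric])
  have e2: "(\<Sum>n. qpoch z q (Suc n) * qpoch q q n
                 / (qpoch (q * a) q (Suc n) * qpoch (q * a / z) q (Suc n))
                 * (q * a / z) ^ Suc n * \<alpha> (Suc n)) = Tot - S2"
    by (rule sums_unique[OF ac2sums, symmetric])
  show ?thesis unfolding e1 e2 S2_def by simp
qed

end

lemma ua: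
  fixes s t Ak Qk Qm Ank V D1 D2 D3 E F N2 P1 P2 :: complex
  assumes "D1 \<noteq> 0" "Qk \<noteq> 0" "Qm \<noteq> 0" "Ank \<noteq> 0" "D2 \<noteq> 0" "D3 \<noteq> 0" "E \<noteq> 0" "F \<noteq> 0"
    and poly: "D2*D3 - N2*D1 = -(V*P1*P2)"
  shows "s*t*Ak*F/(D1*Qk*(Qm*F)*Ank) + N2*(E*Ak)*(-s)*t/(E*(Qk*D2))/(Qm*(Ank*D3))
     = (-s)*(t*V)*(Ak*P1)*P2/(D1*(Qk*D2)*Qm*(Ank*D3))"
proof -
  have "s*t*Ak*F/(D1*Qk*(Qm*F)*Ank) + N2*(E*Ak)*(-s)*t/(E*(Qk*D2))/(Qm*(Ank*D3))
     = s*t*Ak*(D2*D3 - N2*D1)/(D1*(Qk*D2)*Qm*(Ank*D3))"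
    using assms(1-8) by (simp add: field_simps)
  also have "\<dots> = (-s)*(t*V)*(Ak*P1)*P2/(D1*(Qk*D2)*Qm*(Ank*D3))" unfolding poly by (simp add: algebra_simps)
  finally show ?thesis .
qed

lemma unit_alg:
  fixes s t Ak Qk Qm Ank V W qq a :: complex
  assumes "1 - V*W \<noteq> 0" "Qk \<noteq> 0" "Qm \<noteq> 0" "Ank \<noteq> 0" "1 - V \<noteq> 0"
     "1 - a*(V*W*V) \<noteq> 0" "1 - a \<noteq> 0" "1 - qq*W \<noteq> 0"
  shows "s*t*Ak*(1 - qq*W)/((1 - V*W)*Qk*(Qm*(1 - qq*W))*Ank)
       + (1 - a*(V*V))*((1-a)*Ak)*(-s)*t/((1-a)*(Qk*(1-V))) / (Qm*(Ank*(1 - a*(V*W*V))))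
     = (-s)*(t*V)*(Ak*(1 - a*V))*(1 - W)/((1 - V*W)*(Qk*(1-V))*Qm*(Ank*(1 - a*(V*W*V))))"
  by (rule ua) (use assms in \<open>auto simp: algebra_simps\<close>)

definition alu :: "complex \<Rightarrow> complex \<Rightarrow> nat \<Rightarrow> complex" where
  "alu a q j = (1 - a*q^(2*j)) * qpoch a q j * (-1)^j * q^(j*(j-1) div 2) / ((1-a) * qpoch q q j)"

lemma qpoch_shift1: "qpoch a q (Suc k) = (1 - a) * qpoch (a*q) q k"
  by (induction k) (simp_all add: qpoch_Suc mult_ac)

lemma exp_e1: "Suc k * (Suc k - 1) div 2 = k*(k+1) div 2"
  by (simp add: mult.commute)

lemma exp_e2: "Suc k * (Suc k + 1) div 2 = k*(k+1) div 2 + Suc k"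
proof -
  have "Suc k * (Suc k + 1) = k*(k+1) + 2*Suc k" by (simp add: algebra_simps)
  thus ?thesis by simp
qed

context qctx
begin

lemma nz1': "qpoch (a*q) q n \<noteq> 0" using nz1[of n] by (simp add: mult.commute)

lemma one_minus_qn: "1 \<le> n \<Longrightarrow> 1 - q^n \<noteq> 0"
proof -
  assume "1 \<le> n"
  then obtain p where p: "n = Suc p" by (cases n) auto
  have "1 - q * q^p \<noteq> 0" using qnz[of "Suc p"] by (simp add: qpoch_Suc)
  thus ?thesis by (simp add: p)
qed

lemma unit_partial:
  assumes a1: "a \<noteq> 1" and n1: "1 \<le> n"
  shows "k \<le> n \<Longrightarrow> (\<Sum>j\<le>k. alu a q j / (qpoch q q (n-j) * qpoch (a*q) q (n+j)))
     = (-1)^k * q^(k*(k+1) div 2) * qpoch (a*q) q k * (1 - q^(n-k))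
       / ((1 - q^n) * qpoch q q k * qpoch q q (n-k) * qpoch (a*q) q (n+k))"
proof (induction k)
  case 0
  have "alu a q 0 = 1" using a1 by (simp add: alu_def)
  thus ?case using one_minus_qn[OF n1] by simp
next
  case (Suc k)
  hence kn: "k \<le> n" by simp
  define s where "s = ((-1)^k :: complex)"
  define t where "t = q^(k*(k+1) div 2)"
  define Ak where "Ak = qpoch (a*q) q k"
  define Qk where "Qk = qpoch q q k"
  define m where "m = n - Suc k"
  define Qm where "Qm = qpoch q q m"
  define Ank where "Ank = qpoch (a*q) q (n+k)"
  define V where "V = q^(Suc k)"
  define W where "W = q^m"
  have nm: "n = Suc k + m" using Suc.prems unfolding m_def by simp
  have f1: "n - k = Suc m" using nm by simp
  have f2: "q^n = V*W" unfolding V_def W_def nm by (simp add: power_add)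
  have f4: "qpoch (a*q) q (n + Suc k) = Ank * (1 - a*(V*W*V))"
  proof -
    have "q * q^(n+k) = V*W*V" unfolding V_def W_def nm by (simp add: power_add mult_ac)
    moreover have "n + Suc k = Suc (n + k)" by simp
    ultimately show ?thesis unfolding Ank_def by (simp add: qpoch_Suc mult_ac)
  qed
  have h3: "(-1::complex)^Suc k = - s" by (simp add: s_def)
  have h5: "qpoch q q (Suc k) = Qk * (1 - V)" by (simp add: Qk_def V_def qpoch_Suc)
  have h6: "qpoch q q (n - Suc k) = Qm" by (simp add: Qm_def m_def)
  have g1: "q^(Suc m) = q*W" by (simp add: W_def)
  have g2: "qpoch q q (Suc m) = Qm * (1 - q*W)" by (simp add: Qm_def W_def qpoch_Suc)
  have g3: "qpoch (a*q) q (Suc k) = Ak * (1 - a*V)" by (simp add: Ak_def V_def qpoch_Suc mult_ac)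
  have g4: "q^(n - Suc k) = W" by (simp add: W_def m_def)
  have RHSk: "(-1)^k * q^(k*(k+1) div 2) * qpoch (a*q) q k * (1 - q^(n-k))
       / ((1 - q^n) * qpoch q q k * qpoch q q (n-k) * qpoch (a*q) q (n+k))
     = s*t*Ak*(1 - q*W)/((1 - V*W)*Qk*(Qm*(1 - q*W))*Ank)"
    unfolding f1 f2 g1 g2 s_def[symmetric] t_def[symmetric] Ak_def[symmetric] Qk_def[symmetric] Ank_def[symmetric] ..
  have alS: "alu a q (Suc k) / (qpoch q q (n - Suc k) * qpoch (a*q) q (n + Suc k))
     = (1 - a*(V*V))*((1-a)*Ak)*(-s)*t/((1-a)*(Qk*(1-V))) / (Qm*(Ank*(1 - a*(V*W*V))))"
  proof -
    have h1: "q^(2 * Suc k) = V*V" unfolding V_def by (simp add: mult_2 power_add)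
    have h2: "qpoch a q (Suc k) = (1 - a) * Ak" unfolding Ak_def by (rule qpoch_shift1)
    have h4: "q^(Suc k * (Suc k - 1) div 2) = t" unfolding t_def exp_e1 ..
    show ?thesis unfolding alu_def h1 h2 h3 h4 h5 h6 f4 ..
  qed
  have RHSs: "(-1)^Suc k * q^(Suc k*(Suc k+1) div 2) * qpoch (a*q) q (Suc k) * (1 - q^(n-Suc k))
       / ((1 - q^n) * qpoch q q (Suc k) * qpoch q q (n-Suc k) * qpoch (a*q) q (n+Suc k))
     = (-s)*(t*V)*(Ak*(1 - a*V))*(1 - W)/((1 - V*W)*(Qk*(1-V))*Qm*(Ank*(1 - a*(V*W*V))))"
  proof -
    have h7: "q^(Suc k*(Suc k+1) div 2) = t * V" unfolding exp_e2 t_def V_def by (simp add: power_add)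
    show ?thesis unfolding h3 h7 g3 g4 f2 h5 h6 f4 ..
  qed
  have "(\<Sum>j\<le>Suc k. alu a q j / (qpoch q q (n-j) * qpoch (a*q) q (n+j)))
      = (\<Sum>j\<le>k. alu a q j / (qpoch q q (n-j) * qpoch (a*q) q (n+j)))
        + alu a q (Suc k) / (qpoch q q (n - Suc k) * qpoch (a*q) q (n + Suc k))"
    by simp
  also have "\<dots> = s*t*Ak*(1 - q*W)/((1 - V*W)*Qk*(Qm*(1 - q*W))*Ank)
       + (1 - a*(V*V))*((1-a)*Ak)*(-s)*t/((1-a)*(Qk*(1-V))) / (Qm*(Ank*(1 - a*(V*W*V))))"
    unfolding Suc.IH[OF kn] RHSk alS ..
  also have "\<dots> = (-s)*(t*V)*(Ak*(1 - a*V))*(1 - W)/((1 - V*W)*(Qk*(1-V))*Qm*(Ank*(1 - a*(V*W*V))))"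
  proof (rule unit_alg)
    show "1 - V*W \<noteq> 0" using one_minus_qn[OF n1] f2 by simp
    show "Qk \<noteq> 0" "Qm \<noteq> 0" unfolding Qk_def Qm_def by (rule qnz)+
    show "Ank \<noteq> 0" unfolding Ank_def by (rule nz1')
    show "1 - V \<noteq> 0" using one_minus_qn[of "Suc k"] by (simp add: V_def)
    show "1 - a*(V*W*V) \<noteq> 0" using nz1'[of "n + Suc k"] f4 by simp
    show "1 - a \<noteq> 0" using a1 by simp
    show "1 - q*W \<noteq> 0" using qnz[of "Suc m"] by (simp add: W_def qpoch_Suc)
  qed
  also have "\<dots> = (-1)^Suc k * q^(Suc k*(Suc k+1) div 2) * qpoch (a*q) q (Suc k) * (1 - q^(n-Suc k))
       / ((1 - q^n) * qpoch q q (Suc k) * qpoch q q (n-Suc k) * qpoch (a*q) q (n+Suc k))"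
    by (rule RHSs[symmetric])
  finally show ?case .
qed

lemma unit_zero:
  assumes "a \<noteq> 1" "1 \<le> n"
  shows "(\<Sum>j\<le>n. alu a q j / (qpoch q q (n-j) * qpoch (a*q) q (n+j))) = 0"
  using unit_partial[OF assms order_refl] by simp

end


lemma csq:
  fixes s a q :: complex
  assumes "s * s = a"
  shows "qpoch (q* s) q N * qpoch (-q* s) q N * (1-a) = qpoch s q N * qpoch (-s) q N * (1 - a*q^(2*N))"
proof (induction N)
  case 0 thus ?case by simp
next
  case (Suc N)
  have f: "(1 - q* s*q^N)*(1 - (-q* s)*q^N) = 1 - a*q^(2*Suc N)"
  proof -
    have h1: "(1 - q* s*q^N)*(1 - (-q* s)*q^N) = 1 - (s* s)*((q*q^N)*(q*q^N))" by (simp add: algebra_simps)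
    have h2: "(q*q^N)*(q*q^N) = q^(2*Suc N)" by (simp add: mult_2 power_add)
    show ?thesis unfolding h1 h2 assms ..
  qed
  have g: "(1 - s*q^N)*(1 - (-s)*q^N) = 1 - a*q^(2*N)"
  proof -
    have h1: "(1 - s*q^N)*(1 - (-s)*q^N) = 1 - (s* s)*(q^N*q^N)" by (simp add: algebra_simps)
    have h2: "q^N*q^N = q^(2*N)" by (simp add: mult_2 power_add)
    show ?thesis unfolding h1 h2 assms ..
  qed
  have "qpoch (q* s) q (Suc N) * qpoch (-q* s) q (Suc N) * (1-a)
      = (qpoch (q* s) q N * qpoch (-q* s) q N * (1-a)) * ((1 - q* s*q^N)*(1 - (-q* s)*q^N))"
    by (simp add: qpoch_Suc mult_ac)
  also have "\<dots> = qpoch s q N * qpoch (-s) q N * (1 - a*q^(2*N)) * (1 - a*q^(2*Suc N))"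
    unfolding Suc.IH f ..
  also have "\<dots> = qpoch s q N * qpoch (-s) q N * ((1 - s*q^N)*(1 - (-s)*q^N)) * (1 - a*q^(2*Suc N))"
    unfolding g ..
  also have "\<dots> = qpoch s q (Suc N) * qpoch (-s) q (Suc N) * (1 - a*q^(2*Suc N))"
    by (simp add: qpoch_Suc mult_ac)
  finally show ?case .
qed

lemma term_helper:
  fixes Z Qn AQ X qN az Y Ap sN T E P1 P2 S1 S2 D :: complex
  assumes "Qn \<noteq> 0" "E \<noteq> 0" "S1 * S2 \<noteq> 0" "P1 * P2 * E = S1 * S2 * Y"
  shows "Z * Qn / (AQ * X) * (qN * az) * (Y * Ap * sN * T / (E * (Qn * D)))
       = P1 * P2 * Ap * Z * (T * qN) / (S1 * S2 * AQ * X * D) * (sN * az)"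
proof -
  have Y: "Y = P1 * P2 * E / (S1 * S2)" using assms(3,4) by (simp add: field_simps)
  show ?thesis unfolding Y using assms(1-3) by (simp add: field_simps)
qed

context qctx
begin

lemma S1_eq:
  assumes nz3: "\<And>n. qpoch (csqrt a) q n \<noteq> 0"
    and nz4: "\<And>n. qpoch (- csqrt a) q n \<noteq> 0"
    and ac3: "summable (\<lambda>n. norm (
                 qpoch (q * csqrt a) q (Suc n) * qpoch (- q * csqrt a) q (Suc n)
                   * qpoch a q (Suc n) * qpoch z q (Suc n) * q ^ (Suc n * (Suc n + 1) div 2)
                 / (qpoch (csqrt a) q (Suc n) * qpoch (- csqrt a) q (Suc n)
                   * qpoch (q * a) q (Suc n) * qpoch (q * a / z) q (Suc n) * (1 - q ^ Suc n))
                 * (- a / z) ^ Suc n))"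
    and ac4: "summable (\<lambda>n. norm (qpoch z q (Suc n) / (qpoch (q * a) q (Suc n) * (1 - q ^ Suc n))
                 * (q * a / z) ^ Suc n))"
  shows "(\<Sum>n. qpoch z q (Suc n) / (qpoch (q * a) q (Suc n) * (1 - q ^ Suc n)) * (q * a / z) ^ Suc n)
     = - (\<Sum>n. qpoch (q * csqrt a) q (Suc n) * qpoch (- q * csqrt a) q (Suc n)
                   * qpoch a q (Suc n) * qpoch z q (Suc n) * q ^ (Suc n * (Suc n + 1) div 2)
                 / (qpoch (csqrt a) q (Suc n) * qpoch (- csqrt a) q (Suc n)
                   * qpoch (q * a) q (Suc n) * qpoch (q * a / z) q (Suc n) * (1 - q ^ Suc n))
                 * (- a / z) ^ Suc n)"
proof -
  define sq where "sq = csqrt a"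
  have sqsq: "sq * sq = a" unfolding sq_def by (metis power2_csqrt power2_eq_square)
  have a1: "a \<noteq> 1"
  proof
    assume "a = 1"
    hence "sq = 1" unfolding sq_def by simp
    thus False using nz3[of 1] by (simp add: sq_def qpoch_Suc)
  qed
  define \<beta>u where "\<beta>u n = (if n = 0 then 1 else (\<Sum>j\<le>n. alu a q j / (qpoch q q (n - j) * qpoch (a * q) q (n + j))))" for n
  have teq: "qpoch z q (Suc n) * qpoch q q n
                 / (qpoch (q * a) q (Suc n) * qpoch (q * a / z) q (Suc n))
                 * (q * a / z) ^ Suc n * alu a q (Suc n)
     = qpoch (q * csqrt a) q (Suc n) * qpoch (- q * csqrt a) q (Suc n)
                   * qpoch a q (Suc n) * qpoch z q (Suc n) * q ^ (Suc n * (Suc n + 1) div 2)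
                 / (qpoch (csqrt a) q (Suc n) * qpoch (- csqrt a) q (Suc n)
                   * qpoch (q * a) q (Suc n) * qpoch (q * a / z) q (Suc n) * (1 - q ^ Suc n))
                 * (- a / z) ^ Suc n" for n
  proof -
    define N where "N = Suc n"
    have e1: "(q * a / z) ^ N = q ^ N * (a / z) ^ N" by (simp add: power_mult_distrib[symmetric])
    have e2: "(- a / z) ^ N = (-1) ^ N * (a / z) ^ N"
      by (simp add: power_mult_distrib[symmetric])
    have e3: "q ^ (N * (N + 1) div 2) = q ^ (N * (N - 1) div 2) * q ^ N"
      unfolding N_def exp_e2 exp_e1 by (simp add: power_add)
    have e4: "qpoch q q N = qpoch q q n * (1 - q ^ N)" by (simp add: N_def qpoch_Suc)
    show ?thesis unfolding N_def[symmetric] alu_def e1 e2 e3 e4 sq_def[symmetric]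
    proof (rule term_helper)
      show "qpoch q q n \<noteq> 0" by (rule qnz)
      show "1 - a \<noteq> 0" using a1 by simp
      show "qpoch sq q N * qpoch (- sq) q N \<noteq> 0" using nz3 nz4 by (simp add: sq_def)
      show "qpoch (q * sq) q N * qpoch (- q * sq) q N * (1 - a) = qpoch sq q N * qpoch (- sq) q N * (1 - a * q ^ (2 * N))"
        using csq[OF sqsq, of q N] by simp
    qed
  qed
  have ac2: "summable (\<lambda>n. norm (qpoch z q (Suc n) * qpoch q q n
                 / (qpoch (q * a) q (Suc n) * qpoch (q * a / z) q (Suc n))
                 * (q * a / z) ^ Suc n * alu a q (Suc n)))"
    unfolding teq by (rule ac3)
  have m: "(\<Sum>n. qpoch z q (Suc n) * qpoch q q n * (q * a / z) ^ Suc n * \<beta>u (Suc n))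
             - (\<Sum>n. qpoch z q (Suc n) * qpoch q q n
                 / (qpoch (q * a) q (Suc n) * qpoch (q * a / z) q (Suc n))
                 * (q * a / z) ^ Suc n * alu a q (Suc n))
        = (\<Sum>n. qpoch z q (Suc n) / (qpoch (q * a) q (Suc n) * (1 - q ^ Suc n)) * (q * a / z) ^ Suc n)"
    by (rule main_lemma[OF _ _ ac2 ac4]) (use a1 in \<open>auto simp: alu_def \<beta>u_def\<close>)
  have z: "\<beta>u (Suc n) = 0" for n using unit_zero[OF a1, of "Suc n"] by (simp add: \<beta>u_def)
  show ?thesis using m unfolding z teq by simp
qed

end


definition PP :: "complex \<Rightarrow> complex \<Rightarrow> complex \<Rightarrow> nat \<Rightarrow> complex" where
  "PP a q u n = (\<Prod>k<n. u - a * q^k)"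

definition gs :: "complex \<Rightarrow> complex \<Rightarrow> complex \<Rightarrow> nat \<Rightarrow> complex" where
  "gs a q u n = q^(Suc n) * PP a q u (Suc n) / (qpoch (q*a) q (Suc n) * (1 - q^(Suc n)))"

definition Lt :: "complex \<Rightarrow> complex \<Rightarrow> nat \<Rightarrow> complex" where
  "Lt q u n = u * q^(Suc n) / (1 - u * q^(Suc n))"

lemma PP_Suc: "PP a q u (Suc n) = PP a q u n * (u - a * q^n)"
  by (simp add: PP_def)

lemma PP_shift: "PP a q (u*q) (Suc n) = (u*q - a) * q^n * PP a q u n"
proof (induction n)
  case 0 thus ?case by (simp add: PP_def)
next
  case (Suc n)
  have "PP a q (u*q) (Suc (Suc n)) = PP a q (u*q) (Suc n) * (u*q - a*q^(Suc n))" by (rule PP_Suc)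
  also have "\<dots> = (u*q - a)*q^n*PP a q u n*(u*q - a*q^(Suc n))" unfolding Suc.IH ..
  also have "\<dots> = (u*q - a)*q^(Suc n)*PP a q u (Suc n)" unfolding PP_Suc by (simp add: algebra_simps)
  finally show ?case .
qed

lemma PP_zero: "m < n \<Longrightarrow> PP a q (a * q^m) n = 0"
  unfolding PP_def by (rule prod_zero) auto

lemma PP_div: "z \<noteq> 0 \<Longrightarrow> PP a q (a/z) n = (a/z)^n * qpoch z q n"
proof (induction n)
  case 0 thus ?case by (simp add: PP_def)
next
  case (Suc n) thus ?case by (simp add: PP_Suc qpoch_Suc field_simps)
qed

lemma lin4: "g0 - l0 + la = 0 \<Longrightarrow> l0 - l1 = c \<Longrightarrow> g0 - g1 = c \<Longrightarrow> g1 - l1 + la = (0::complex)"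
  by (simp add: algebra_simps)

context qctx
begin

definition hh :: "complex \<Rightarrow> nat \<Rightarrow> complex" where
  "hh u n = q^(Suc n) * u * PP a q u n / qpoch (q*a) q (Suc n)"

definition Gt :: "complex \<Rightarrow> nat \<Rightarrow> complex" where
  "Gt u n = q^n * PP a q u n / qpoch (q*a) q n"

lemma gs_diff: "gs a q u n - gs a q (u*q) n = hh u n"
proof -
  have d: "qpoch (q*a) q (Suc n) \<noteq> 0" "1 - q^(Suc n) \<noteq> 0" using nz1 one_minus_qn[of "Suc n"] by auto
  have "PP a q u (Suc n) - PP a q (u*q) (Suc n) = PP a q u n * (u * (1 - q^(Suc n)))"
    unfolding PP_shift unfolding PP_Suc by (simp add: algebra_simps)
  hence "gs a q u n - gs a q (u*q) n = q^(Suc n) * (PP a q u n * (u * (1 - q^(Suc n))))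
            / (qpoch (q*a) q (Suc n) * (1 - q^(Suc n)))"
    unfolding gs_def by (simp add: diff_divide_distrib[symmetric] right_diff_distrib[symmetric])
  also have "\<dots> = hh u n" unfolding hh_def using d by (simp add: field_simps)
  finally show ?thesis .
qed

lemma hh_tel: "(1 - q*u) * (\<Sum>n<N. hh u n) = q*u*(1 - Gt u N)"
proof (induction N)
  case 0 thus ?case by (simp add: Gt_def PP_def)
next
  case (Suc N)
  have d: "qpoch (q*a) q N \<noteq> 0" "1 - q*a*q^N \<noteq> 0" using nz1 fac_nz1 by auto
  have st: "(1 - q*u) * hh u N = q*u*(Gt u N - Gt u (Suc N))"
    unfolding hh_def Gt_def PP_Suc qpoch_Suc using d by (simp add: field_simps)
  have "(1-q*u)*(\<Sum>n<Suc N. hh u n) = (1-q*u)*(\<Sum>n<N. hh u n) + (1-q*u)*hh u N"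
    by (simp add: algebra_simps)
  also have "\<dots> = q*u*(1 - Gt u N) + q*u*(Gt u N - Gt u (Suc N))" unfolding Suc.IH st ..
  also have "\<dots> = q*u*(1 - Gt u (Suc N))" by (simp add: algebra_simps)
  finally show ?case .
qed

lemma gs_zero_at: "m \<le> n \<Longrightarrow> gs a q (a * q^m) n = 0"
  by (simp add: gs_def PP_zero)

lemma Gf_step:
  assumes "1 - a * q^(Suc m) \<noteq> 0"
  shows "(\<Sum>n. gs a q (a*q^m) n) - (\<Sum>n. gs a q (a*q^(Suc m)) n)
       = a*q^(Suc m) / (1 - a*q^(Suc m))"
proof -
  define u where "u = a*q^m"
  have uq: "a*q^(Suc m) = u*q" by (simp add: u_def mult_ac)
  have s1: "(\<Sum>n. gs a q u n) = (\<Sum>n<Suc m. gs a q u n)"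
    by (rule suminf_finite) (auto simp: u_def gs_zero_at)
  have s2: "(\<Sum>n. gs a q (u*q) n) = (\<Sum>n<Suc m. gs a q (u*q) n)"
    by (rule suminf_finite) (use gs_zero_at[of "Suc m"] in \<open>auto simp: uq[symmetric]\<close>)
  have hs: "(\<Sum>n<Suc m. gs a q u n) - (\<Sum>n<Suc m. gs a q (u*q) n) = (\<Sum>n<Suc m. hh u n)"
    unfolding sum_subtractf[symmetric] gs_diff ..
  have g0: "Gt u (Suc m) = 0" by (simp add: Gt_def u_def PP_zero)
  have nz: "1 - q*u \<noteq> 0" using assms unfolding uq by (simp add: mult.commute)
  have t: "(1 - q*u) * (\<Sum>n<Suc m. hh u n) = q*u" using hh_tel[of u "Suc m"] g0 by simp
  have X: "(\<Sum>n<Suc m. hh u n) = q*u/(1 - q*u)" using t nz by (simp add: eq_divide_eq mult.commute)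
  have fin: "(\<Sum>n<Suc m. gs a q u n) - (\<Sum>n<Suc m. gs a q (u*q) n) = u*q/(1 - u*q)"
    using hs X by (simp add: mult.commute)
  have s1': "(\<Sum>n. gs a q (a*q^m) n) = (\<Sum>n<Suc m. gs a q u n)" using s1 by (simp only: u_def)
  have s2': "(\<Sum>n. gs a q (a*q^(Suc m)) n) = (\<Sum>n<Suc m. gs a q (u*q) n)" unfolding uq by (rule s2)
  show ?thesis using fin unfolding s1' s2' uq[symmetric] .
qed

lemma Lt_summable:
  assumes "\<And>n. 1 - u * q^(Suc n) \<noteq> 0"
  shows "summable (Lt q u)"
proof -
  have lim: "(\<lambda>n. norm u * norm q ^ Suc n) \<longlonglongrightarrow> norm u * 0"
    by (intro tendsto_mult tendsto_const LIMSEQ_power_zero LIMSEQ_Suc) (use q in auto)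
  hence ev: "eventually (\<lambda>n. norm u * norm q ^ Suc n < 1/2) sequentially"
    by (intro order_tendstoD) auto
  show ?thesis
  proof (rule summable_comparison_test_ev)
    show "eventually (\<lambda>n. norm (Lt q u n) \<le> 2 * norm u * norm q ^ Suc n) sequentially"
      using ev
    proof eventually_elim
      case (elim n)
      have "norm (u * q^Suc n) < 1/2" using elim by (simp add: norm_mult norm_power)
      moreover have "1 - norm (u * q^Suc n) \<le> norm (1 - u * q^Suc n)"
        using norm_triangle_ineq2[of 1 "u * q^Suc n"] by simp
      ultimately have "1/2 \<le> norm (1 - u * q^Suc n)" by linarith
      hence "norm (Lt q u n) \<le> norm (u * q^Suc n) / (1/2)"
        unfolding Lt_def norm_divide by (intro divide_left_mono) auto
      thus ?case by (simp add: norm_mult norm_power)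
    qed
    show "summable (\<lambda>n. 2 * norm u * norm q ^ Suc n)"
      by (intro summable_mult summable_Suc_iff[THEN iffD2] summable_geometric) (use q in auto)
  qed
qed

lemma Lf_step:
  assumes "\<And>n. 1 - u * q^(Suc n) \<noteq> 0"
  shows "(\<Sum>n. Lt q u n) - (\<Sum>n. Lt q (u*q) n) = u*q/(1 - u*q)"
proof -
  have sp: "(\<Sum>n. Lt q u (Suc n)) = (\<Sum>n. Lt q u n) - Lt q u 0"
    by (rule suminf_split_head[OF Lt_summable[OF assms]])
  have e: "Lt q u (Suc n) = Lt q (u*q) n" for n
  proof -
    have "u * q ^ Suc (Suc n) = u * q * q ^ Suc n" by (simp only: power_Suc mult.assoc)
    thus ?thesis unfolding Lt_def by (simp add: mult.assoc)
  qed
  have l0: "Lt q u 0 = u*q/(1 - u*q)" unfolding Lt_def by simp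
  have "(\<Sum>n. Lt q (u*q) n) = (\<Sum>n. Lt q u n) - u*q/(1 - u*q)" using sp unfolding e l0 .
  thus ?thesis by simp
qed

lemma D_zero:
  "(\<Sum>n. gs a q (a*q^m) n) - (\<Sum>n. Lt q (a*q^m) n) + (\<Sum>n. Lt q a n) = 0"
proof (induction m)
  case 0
  have "gs a q a n = 0" for n using gs_zero_at[of 0 n] by simp
  hence "(\<Sum>n. gs a q (a * q^0) n) = 0" by simp
  thus ?case by simp
next
  case (Suc m)
  have nzm: "1 - a * q^m * q^(Suc n) \<noteq> 0" for n
    using fac_nz1[of "m+n"] by (simp add: power_add mult_ac)
  have f1: "1 - a * q^(Suc m) \<noteq> 0" using fac_nz1[of m] by (simp add: mult_ac)
  have "(\<Sum>n. Lt q (a*q^m) n) - (\<Sum>n. Lt q (a*q^m*q) n) = a*q^m*q/(1 - a*q^m*q)"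
    by (rule Lf_step) (rule nzm)
  moreover have "a*q^m*q = a*q^(Suc m)" by (simp add: mult_ac)
  ultimately have L: "(\<Sum>n. Lt q (a*q^m) n) - (\<Sum>n. Lt q (a*q^(Suc m)) n) = a*q^(Suc m)/(1 - a*q^(Suc m))"
    by simp
  have G: "(\<Sum>n. gs a q (a*q^m) n) - (\<Sum>n. gs a q (a*q^(Suc m)) n) = a*q^(Suc m)/(1 - a*q^(Suc m))"
    by (rule Gf_step[OF f1])
  show ?case by (rule lin4[OF Suc.IH L G])
qed

end


lemma PP_bound:
  fixes a q u :: complex and \<rho> :: real
  assumes q: "norm q < 1" and rho: "0 < \<rho>" and u: "norm u \<le> \<rho>"
  shows "norm (PP a q u N) \<le> \<rho>^N * exp (norm a / \<rho> / (1 - norm q))"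
proof -
  have "norm (PP a q u N) = (\<Prod>k<N. norm (u - a * q^k))" by (simp add: PP_def prod_norm)
  also have "\<dots> \<le> (\<Prod>k<N. \<rho> * (1 + (norm a / \<rho>) * norm q ^ k))"
  proof (intro prod_mono conjI)
    fix k
    have "norm (u - a * q^k) \<le> norm u + norm a * norm q ^ k"
      by (metis norm_mult norm_power norm_triangle_ineq4)
    also have "\<dots> \<le> \<rho> + norm a * norm q ^ k" using u by simp
    also have "\<dots> = \<rho> * (1 + (norm a / \<rho>) * norm q ^ k)" using rho by (simp add: field_simps)
    finally show "norm (u - a * q^k) \<le> \<rho> * (1 + (norm a / \<rho>) * norm q ^ k)" .
  qed auto
  also have "\<dots> = \<rho>^N * (\<Prod>k<N. 1 + (norm a / \<rho>) * norm q ^ k)"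
    by (simp add: prod.distrib)
  also have "\<dots> \<le> \<rho>^N * exp (norm a / \<rho> / (1 - norm q))"
    by (intro mult_left_mono real_prod_exp_bound) (use q rho in auto)
  finally show ?thesis .
qed

context qctx
begin

lemma one_minus_q_lower: "1 - norm q \<le> norm (1 - q^(Suc n))"
proof -
  have h1: "norm q ^ Suc n \<le> norm q"
    using q by (simp add: power_le_one mult_left_le)
  have h2: "1 - norm q ^ Suc n \<le> norm (1 - q^Suc n)"
    using norm_triangle_ineq2[of 1 "q^Suc n"] by (simp add: norm_mult norm_power)
  from h1 h2 show ?thesis by linarith
qed

lemma holo_G:
  assumes q0: "q \<noteq> 0"
  shows "(\<lambda>u. \<Sum>n. gs a q u n) holomorphic_on ball 0 (1 / norm q)"
proof (rule holomorphic_uniform_sequence[where f = "\<lambda>N u. \<Sum>n<N. gs a q u n"])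
  show "open (ball (0::complex) (1 / norm q))" by simp
  show "(\<lambda>u. \<Sum>n<N. gs a q u n) holomorphic_on ball 0 (1 / norm q)" for N
    unfolding gs_def PP_def
    by (intro holomorphic_intros) (use nz1 one_minus_qn[of "Suc _"] in auto)
  fix x :: complex assume x: "x \<in> ball 0 (1 / norm q)"
  define R where "R = 1 / norm q"
  have nq: "norm q > 0" using q0 by simp
  have xR: "norm x < R" using x by (simp add: R_def)
  define d where "d = (R - norm x) / 2"
  define \<rho> where "\<rho> = (R + norm x) / 2"
  have dpos: "d > 0" using xR by (simp add: d_def)
  have Rpos: "R > 0" using nq by (simp add: R_def)
  have rhopos: "\<rho> > 0" unfolding \<rho>_def using Rpos by (simp add: add_pos_nonneg)
  have rhoR: "\<rho> < R" using xR by (simp add: \<rho>_def)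
  have qrho: "norm q * \<rho> < 1"
  proof -
    have "norm q * \<rho> < norm q * R" using rhoR nq by simp
    thus ?thesis using nq by (simp add: R_def)
  qed
  have xdrho: "norm x + d = \<rho>" by (simp add: d_def \<rho>_def field_simps)
  have incb: "norm u \<le> \<rho>" if "u \<in> cball x d" for u
  proof -
    have "norm u \<le> norm x + norm (u - x)" using norm_triangle_ineq[of x "u - x"] by simp
    moreover have "norm (u - x) \<le> d" using that by (simp add: dist_norm norm_minus_commute)
    ultimately show ?thesis using xdrho by linarith
  qed
  have cb: "cball x d \<subseteq> ball 0 (1 / norm q)"
  proof
    fix u assume "u \<in> cball x d"
    hence "norm u < R" using incb rhoR by fastforce
    thus "u \<in> ball 0 (1 / norm q)" unfolding R_def by simp
  qed
  obtain \<delta> where dl: "\<delta> > 0" "\<And>n. \<delta> \<le> norm (qpoch (q*a) q n)"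
    using qpoch_lower[OF q nz1] by blast
  define E where "E = exp (norm a / \<rho> / (1 - norm q))"
  define K where "K = E / (\<delta> * (1 - norm q))"
  have ulim: "uniform_limit (cball x d) (\<lambda>N u. \<Sum>n<N. gs a q u n) (\<lambda>u. \<Sum>n. gs a q u n) sequentially"
  proof (rule Weierstrass_m_test[where M = "\<lambda>n. K * (norm q * \<rho>)^(Suc n)"])
    fix n and u :: complex assume u: "u \<in> cball x d"
    hence nu: "norm u \<le> \<rho>" by (rule incb)
    have "norm (gs a q u n) = norm q ^ Suc n * norm (PP a q u (Suc n))
        / (norm (qpoch (q*a) q (Suc n)) * norm (1 - q^Suc n))"
      by (simp add: gs_def norm_mult norm_divide norm_power)
    also have "\<dots> \<le> norm q ^ Suc n * (\<rho>^Suc n * E) / (\<delta> * (1 - norm q))"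
    proof -
      have pb: "norm (PP a q u (Suc n)) \<le> \<rho>^Suc n * E" using PP_bound[OF q rhopos nu, where a=a and N="Suc n"] unfolding E_def .
      have num: "norm q ^ Suc n * norm (PP a q u (Suc n)) \<le> norm q ^ Suc n * (\<rho>^Suc n * E)"
        by (rule mult_left_mono[OF pb]) simp
      have den: "\<delta> * (1 - norm q) \<le> norm (qpoch (q*a) q (Suc n)) * norm (1 - q^Suc n)"
        by (rule mult_mono[OF dl(2) one_minus_q_lower]) (use dl q in auto)
      have Epos: "E > 0" by (simp add: E_def)
      show ?thesis by (rule frac_le[OF _ num _ den]) (use Epos rhopos dl q in auto)
    qed
    also have "\<dots> = K * (norm q * \<rho>)^(Suc n)" by (simp add: K_def power_mult_distrib field_simps)
    finally show "norm (gs a q u n) \<le> K * (norm q * \<rho>)^(Suc n)" .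
  next
    show "summable (\<lambda>n. K * (norm q * \<rho>)^(Suc n))"
      by (intro summable_mult summable_Suc_iff[THEN iffD2] summable_geometric) (use qrho nq rhopos in auto)
  qed
  show "\<exists>d>0. cball x d \<subseteq> ball 0 (1 / norm q) \<and>
        uniform_limit (cball x d) (\<lambda>N u. \<Sum>n<N. gs a q u n) (\<lambda>u. \<Sum>n. gs a q u n) sequentially"
    using dpos cb ulim by blast
qed

lemma Lt_den_nz:
  assumes "norm u < 1 / norm q"
  shows "1 - u * q^(Suc n) \<noteq> 0"
proof
  assume h: "1 - u * q^(Suc n) = 0"
  have "norm (u * q^Suc n) = 1" using h by (metis eq_iff_diff_eq_0 norm_one)
  moreover have "norm (u * q^Suc n) < 1"
  proof (cases "q = 0")
    case True thus ?thesis by simp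
  next
    case False
    have "norm q ^ Suc n \<le> norm q" using q by (simp add: power_le_one mult_left_le)
    hence "norm u * norm q ^ Suc n \<le> norm u * norm q" by (simp add: mult_left_mono)
    also have "norm u * norm q < 1" using assms False by (simp add: field_simps)
    finally show ?thesis by (simp add: norm_mult norm_power)
  qed
  ultimately show False by simp
qed

lemma holo_L:
  assumes q0: "q \<noteq> 0"
  shows "(\<lambda>u. \<Sum>n. Lt q u n) holomorphic_on ball 0 (1 / norm q)"
proof (rule holomorphic_uniform_sequence[where f = "\<lambda>N u. \<Sum>n<N. Lt q u n"])
  show "open (ball (0::complex) (1 / norm q))" by simp
  show "(\<lambda>u. \<Sum>n<N. Lt q u n) holomorphic_on ball 0 (1 / norm q)" for N
    unfolding Lt_def by (intro holomorphic_intros) (use Lt_den_nz in auto)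
  fix x :: complex assume x: "x \<in> ball 0 (1 / norm q)"
  define R where "R = 1 / norm q"
  have nq: "norm q > 0" using q0 by simp
  have xR: "norm x < R" using x by (simp add: R_def)
  define d where "d = (R - norm x) / 2"
  define \<rho> where "\<rho> = (R + norm x) / 2"
  have dpos: "d > 0" using xR by (simp add: d_def)
  have Rpos: "R > 0" using nq by (simp add: R_def)
  have rhopos: "\<rho> > 0" unfolding \<rho>_def using Rpos by (simp add: add_pos_nonneg)
  have rhoR: "\<rho> < R" using xR by (simp add: \<rho>_def)
  have qrho: "norm q * \<rho> < 1"
  proof -
    have "norm q * \<rho> < norm q * R" using rhoR nq by simp
    thus ?thesis using nq by (simp add: R_def)
  qed
  have xdrho: "norm x + d = \<rho>" by (simp add: d_def \<rho>_def field_simps)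
  have incb: "norm u \<le> \<rho>" if "u \<in> cball x d" for u
  proof -
    have "norm u \<le> norm x + norm (u - x)" using norm_triangle_ineq[of x "u - x"] by simp
    moreover have "norm (u - x) \<le> d" using that by (simp add: dist_norm norm_minus_commute)
    ultimately show ?thesis using xdrho by linarith
  qed
  have cb: "cball x d \<subseteq> ball 0 (1 / norm q)"
  proof
    fix u assume "u \<in> cball x d"
    hence "norm u < R" using incb rhoR by fastforce
    thus "u \<in> ball 0 (1 / norm q)" unfolding R_def by simp
  qed
  define K where "K = \<rho> / (1 - norm q * \<rho>)"
  have ulim: "uniform_limit (cball x d) (\<lambda>N u. \<Sum>n<N. Lt q u n) (\<lambda>u. \<Sum>n. Lt q u n) sequentially"
  proof (rule Weierstrass_m_test[where M = "\<lambda>n. K * norm q ^ (Suc n)"])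
    fix n and u :: complex assume u: "u \<in> cball x d"
    hence nu: "norm u \<le> \<rho>" by (rule incb)
    have qn: "norm q ^ Suc n \<le> norm q" using q by (simp add: power_le_one mult_left_le)
    have num: "norm (u * q^Suc n) \<le> \<rho> * norm q ^ Suc n"
      unfolding norm_mult norm_power by (rule mult_right_mono[OF nu]) simp
    have "\<rho> * norm q ^ Suc n \<le> \<rho> * norm q" using qn rhopos by (simp add: mult_left_mono)
    hence small: "norm (u * q^Suc n) \<le> norm q * \<rho>" using num by (simp add: mult.commute)
    have den: "1 - norm q * \<rho> \<le> norm (1 - u * q^Suc n)"
      using norm_triangle_ineq2[of 1 "u * q^Suc n"] small by simp
    have "norm (Lt q u n) = norm (u * q^Suc n) / norm (1 - u * q^Suc n)"
      by (simp add: Lt_def norm_divide)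
    also have "\<dots> \<le> (\<rho> * norm q ^ Suc n) / (1 - norm q * \<rho>)"
      by (rule frac_le[OF _ num _ den]) (use qrho rhopos in auto)
    also have "\<dots> = K * norm q ^ Suc n" by (simp add: K_def)
    finally show "norm (Lt q u n) \<le> K * norm q ^ (Suc n)" .
  next
    show "summable (\<lambda>n. K * norm q ^ (Suc n))"
      by (intro summable_mult summable_Suc_iff[THEN iffD2] summable_geometric) (use q in auto)
  qed
  show "\<exists>d>0. cball x d \<subseteq> ball 0 (1 / norm q) \<and>
        uniform_limit (cball x d) (\<lambda>N u. \<Sum>n<N. Lt q u n) (\<lambda>u. \<Sum>n. Lt q u n) sequentially"
    using dpos cb ulim by blast
qed

lemma S2_S3:
  "(\<Sum>n. qpoch z q (Suc n) / (qpoch (q * a) q (Suc n) * (1 - q ^ Suc n)) * (q * a / z) ^ Suc n)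
   = (\<Sum>n. (a * q ^ Suc n / z) / (1 - a * q ^ Suc n / z)) - (\<Sum>n. (a * q ^ Suc n) / (1 - a * q ^ Suc n))"
proof (cases "a = 0 \<or> q = 0")
  case True thus ?thesis by auto
next
  case False
  hence a0: "a \<noteq> 0" and q0: "q \<noteq> 0" by auto
  define S where "S = ball (0::complex) (1 / norm q)"
  define Df where "Df u = (\<Sum>n. gs a q u n) - (\<Sum>n. Lt q u n) + (\<Sum>n. Lt q a n)" for u
  define U where "U = S \<inter> range (\<lambda>m. a * q^m)"
  have hol: "Df holomorphic_on S"
    unfolding Df_def S_def by (intro holomorphic_intros holo_G holo_L q0)
  have w: "a / z \<in> S"
  proof -
    have "norm q * norm a < norm z" using hz by (simp add: norm_mult)
    hence "norm a / norm z < 1 / norm q" using q0 z_nz by (simp add: field_simps)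
    thus ?thesis by (simp add: S_def norm_divide)
  qed
  have zS: "0 \<in> S" by (simp add: S_def q0)
  have lp: "0 islimpt U"
  proof (rule islimpt_approachable[THEN iffD2], intro allI impI)
    fix e :: real assume e: "e > 0"
    have "(\<lambda>m. norm a * norm q ^ m) \<longlonglongrightarrow> norm a * 0"
      by (intro tendsto_mult tendsto_const LIMSEQ_power_zero) (use q in auto)
    moreover have "min e (1 / norm q) > 0" using e q0 by simp
    ultimately have "eventually (\<lambda>m. norm a * norm q ^ m < min e (1 / norm q)) sequentially"
      by (intro order_tendstoD) auto
    then obtain m where m: "norm a * norm q ^ m < min e (1 / norm q)" by (auto simp: eventually_sequentially)
    have rg: "a * q^m \<in> range (\<lambda>m. a * q^m)" by (rule image_eqI[where x=m]) auto
    have "a * q^m \<in> U" using m rg by (simp add: U_def S_def norm_mult norm_power)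
    moreover have "a * q^m \<noteq> 0" using a0 q0 by simp
    moreover have "dist (a * q^m) 0 < e" using m by (simp add: norm_mult norm_power)
    ultimately show "\<exists>x'\<in>U. x' \<noteq> 0 \<and> dist x' 0 < e" by blast
  qed
  have DU: "Df u = 0" if "u \<in> U" for u
  proof -
    from that obtain m where "u = a * q^m" by (auto simp: U_def)
    thus ?thesis using D_zero[of m] by (simp add: Df_def)
  qed
  have D0: "Df (a / z) = 0"
    by (rule analytic_continuation[OF hol _ _ _ zS lp DU w]) (auto simp: S_def U_def)
  have e1: "gs a q (a / z) n = qpoch z q (Suc n) / (qpoch (q * a) q (Suc n) * (1 - q ^ Suc n)) * (q * a / z) ^ Suc n" for n
  proof -
    have "q ^ Suc n * PP a q (a / z) (Suc n) = qpoch z q (Suc n) * (q * a / z) ^ Suc n"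
      unfolding PP_div[OF z_nz] by (simp add: power_mult_distrib[symmetric] mult_ac)
    thus ?thesis unfolding gs_def by (simp add: mult_ac)
  qed
  have e2: "Lt q (a / z) n = (a * q ^ Suc n / z) / (1 - a * q ^ Suc n / z)" for n
    by (simp add: Lt_def)
  have e3: "Lt q a n = (a * q ^ Suc n) / (1 - a * q ^ Suc n)" for n
    by (simp add: Lt_def)
  have "Df (a / z) = (\<Sum>n. qpoch z q (Suc n) / (qpoch (q * a) q (Suc n) * (1 - q ^ Suc n)) * (q * a / z) ^ Suc n)
     - (\<Sum>n. (a * q ^ Suc n / z) / (1 - a * q ^ Suc n / z)) + (\<Sum>n. (a * q ^ Suc n) / (1 - a * q ^ Suc n))"
    unfolding Df_def e1 e2 e3 ..
  thus ?thesis using D0 by (simp add: algebra_simps)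
qed

end

theorem theorem3p1:
  fixes a q z :: complex and \<alpha> \<beta> :: "nat \<Rightarrow> complex"
  assumes hq: "norm q < 1"
    and hBP: "bailey_pair a q \<alpha> \<beta>"
    and hz: "norm (q * a) < norm z"
    and nz1: "\<And>n. qpoch (q * a) q n \<noteq> 0"
    and nz2: "\<And>n. qpoch (q * a / z) q n \<noteq> 0"
    and nz3: "\<And>n. qpoch (csqrt a) q n \<noteq> 0"
    and nz4: "\<And>n. qpoch (- csqrt a) q n \<noteq> 0"
    and nz5: "\<And>n. n \<ge> 1 \<Longrightarrow> 1 - q ^ n \<noteq> 0"
    and nz6: "\<And>n. n \<ge> 1 \<Longrightarrow> 1 - a * q ^ n / z \<noteq> 0"
    and nz7: "\<And>n. n \<ge> 1 \<Longrightarrow> 1 - a * q ^ n \<noteq> 0"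
    and ac1: "summable (\<lambda>n. norm (qpoch z q (Suc n) * qpoch q q n * (q * a / z) ^ Suc n * \<beta> (Suc n)))"
    and ac2: "summable (\<lambda>n. norm (qpoch z q (Suc n) * qpoch q q n
                 / (qpoch (q * a) q (Suc n) * qpoch (q * a / z) q (Suc n))
                 * (q * a / z) ^ Suc n * \<alpha> (Suc n)))"
    and ac3: "summable (\<lambda>n. norm (
                 qpoch (q * csqrt a) q (Suc n) * qpoch (- q * csqrt a) q (Suc n)
                   * qpoch a q (Suc n) * qpoch z q (Suc n) * q ^ (Suc n * (Suc n + 1) div 2)
                 / (qpoch (csqrt a) q (Suc n) * qpoch (- csqrt a) q (Suc n)
                   * qpoch (q * a) q (Suc n) * qpoch (q * a / z) q (Suc n) * (1 - q ^ Suc n))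
                 * (- a / z) ^ Suc n))"
    and ac4: "summable (\<lambda>n. norm (qpoch z q (Suc n) / (qpoch (q * a) q (Suc n) * (1 - q ^ Suc n))
                 * (q * a / z) ^ Suc n))"
    and ac5: "summable (\<lambda>n. norm ((a * q ^ Suc n / z) / (1 - a * q ^ Suc n / z)))"
    and ac6: "summable (\<lambda>n. norm ((a * q ^ Suc n) / (1 - a * q ^ Suc n)))"
  shows
   "(let LHS = (\<Sum>n. qpoch z q (Suc n) * qpoch q q n * (q * a / z) ^ Suc n * \<beta> (Suc n))
             - (\<Sum>n. qpoch z q (Suc n) * qpoch q q n
                 / (qpoch (q * a) q (Suc n) * qpoch (q * a / z) q (Suc n))
                 * (q * a / z) ^ Suc n * \<alpha> (Suc n))
    in LHS = - (\<Sum>n. qpoch (q * csqrt a) q (Suc n) * qpoch (- q * csqrt a) q (Suc n)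
                   * qpoch a q (Suc n) * qpoch z q (Suc n) * q ^ (Suc n * (Suc n + 1) div 2)
                 / (qpoch (csqrt a) q (Suc n) * qpoch (- csqrt a) q (Suc n)
                   * qpoch (q * a) q (Suc n) * qpoch (q * a / z) q (Suc n) * (1 - q ^ Suc n))
                 * (- a / z) ^ Suc n)
     \<and> LHS = (\<Sum>n. qpoch z q (Suc n) / (qpoch (q * a) q (Suc n) * (1 - q ^ Suc n))
                 * (q * a / z) ^ Suc n)
     \<and> LHS = (\<Sum>n. (a * q ^ Suc n / z) / (1 - a * q ^ Suc n / z))
             - (\<Sum>n. (a * q ^ Suc n) / (1 - a * q ^ Suc n)))"
proof -
  have Q: "qctx a q z" by unfold_locales (use hq hz nz1 nz2 in auto)
  have a0: "\<alpha> 0 = 1" using hBP by (simp add: bailey_pair_def)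
  have bdef: "\<And>n. n > 0 \<Longrightarrow> \<beta> n = (\<Sum>j\<le>n. \<alpha> j / (qpoch q q (n - j) * qpoch (a * q) q (n + j)))"
    using hBP by (simp add: bailey_pair_def)
  note L1 = qctx.main_lemma[OF Q a0 bdef ac2 ac4]
  note L2 = qctx.S1_eq[OF Q nz3 nz4 ac3 ac4]
  note L3 = qctx.S2_S3[OF Q]
  show ?thesis unfolding Let_def by (intro conjI trans[OF L1 L2] L1 trans[OF L1 L3])
qed

end
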